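(* Let $d\ge3$ and let $\mathscr P_d(y,a^\dagger)$ be the space of polynomials in commuting variables $y^\mu,a^{\dagger\mu}$, $\mu=1,\dots,d$. Let $T=\eta^{\mu\nu}\frac{\partial}{\partial a^{\dagger\mu}}\frac{\partial}{\partial a^{\dagger\nu}}$, $\Box=\eta^{\mu\nu}\frac{\partial}{\partial y^\mu}\frac{\partial}{\partial y^\nu}$, $S=\eta^{\mu\nu}\frac{\partial}{\partial a^{\dagger\mu}}\frac{\partial}{\partial y^\nu}$, and let $\mathscr N=\ker T\cap\ker\Box\subset\mathscr P_d(y,a^\dagger)$. Then $S$ maps $\mathscr N$ onto $\mathscr N$, i.e. $S(\mathscr N)=\mathscr N$.
   Context: $\eta^{\mu\nu}$ is a nondegenerate constant symmetric (Minkowski) metric on $\mathbb R^d$. The operators $T,\Box,S$ pairwise commute, so $S$ preserves $\mathscr N$. *)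

theory Defs
  imports Complex_Main
begin

text \<open>Polynomials in the commuting variables y^0..y^(d-1), a^0..a^(d-1) (0-based indices)
  over the reals, represented by their coefficient functions: p al be is the coefficient of
  the monomial prod_mu y^mu^(al mu) * a^mu^(be mu).\<close>

type_synonym cpoly = "(nat \<Rightarrow> nat) \<Rightarrow> (nat \<Rightarrow> nat) \<Rightarrow> real"

definition is_poly :: "nat \<Rightarrow> cpoly \<Rightarrow> bool" where
  "is_poly d p \<longleftrightarrow> finite {(al, be). p al be \<noteq> 0} \<and>
     (\<forall>al be. p al be \<noteq> 0 \<longrightarrow> (\<forall>i. d \<le> i \<longrightarrow> al i = 0 \<and> be i = 0))"

definition dy :: "nat \<Rightarrow> cpoly \<Rightarrow> cpoly" where
  "dy mu p = (\<lambda>al be. of_nat (Suc (al mu)) * p (al(mu := Suc (al mu))) be)"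

definition da :: "nat \<Rightarrow> cpoly \<Rightarrow> cpoly" where
  "da mu p = (\<lambda>al be. of_nat (Suc (be mu)) * p al (be(mu := Suc (be mu))))"

definition opT :: "nat \<Rightarrow> (nat \<Rightarrow> nat \<Rightarrow> real) \<Rightarrow> cpoly \<Rightarrow> cpoly" where
  "opT d eta p = (\<lambda>al be. \<Sum>mu<d. \<Sum>nu<d. eta mu nu * da mu (da nu p) al be)"

definition opBox :: "nat \<Rightarrow> (nat \<Rightarrow> nat \<Rightarrow> real) \<Rightarrow> cpoly \<Rightarrow> cpoly" where
  "opBox d eta p = (\<lambda>al be. \<Sum>mu<d. \<Sum>nu<d. eta mu nu * dy mu (dy nu p) al be)"

definition opS :: "nat \<Rightarrow> (nat \<Rightarrow> nat \<Rightarrow> real) \<Rightarrow> cpoly \<Rightarrow> cpoly" where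
  "opS d eta p = (\<lambda>al be. \<Sum>mu<d. \<Sum>nu<d. eta mu nu * da mu (dy nu p) al be)"

definition harmN :: "nat \<Rightarrow> (nat \<Rightarrow> nat \<Rightarrow> real) \<Rightarrow> cpoly set" where
  "harmN d eta = {p. is_poly d p \<and> opT d eta p = (\<lambda>_ _. 0) \<and> opBox d eta p = (\<lambda>_ _. 0)}"

definition sym_nondeg :: "nat \<Rightarrow> (nat \<Rightarrow> nat \<Rightarrow> real) \<Rightarrow> bool" where
  "sym_nondeg d eta \<longleftrightarrow> (\<forall>mu<d. \<forall>nu<d. eta mu nu = eta nu mu) \<and>
     (\<forall>v::nat \<Rightarrow> real. (\<forall>nu<d. (\<Sum>mu<d. eta mu nu * v mu) = 0) \<longrightarrow> (\<forall>mu<d. v mu = 0))"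

end

theory Submission
  imports Defs "HOL-Library.Function_Algebras"
begin


definition xy :: "nat \<Rightarrow> cpoly \<Rightarrow> cpoly" where
  "xy mu p = (\<lambda>al be. if al mu = 0 then 0 else p (al(mu := al mu - 1)) be)"

definition xa :: "nat \<Rightarrow> cpoly \<Rightarrow> cpoly" where
  "xa mu p = (\<lambda>al be. if be mu = 0 then 0 else p al (be(mu := be mu - 1)))"

definition sm :: "real \<Rightarrow> cpoly \<Rightarrow> cpoly" where
  "sm c p = (\<lambda>al be. c * p al be)"

lemma sum_cpoly_apply: "(\<Sum>i\<in>I. F i) al be = (\<Sum>i\<in>I. F i al be)"
  for F :: "'i \<Rightarrow> cpoly"
  by (induction I rule: infinite_finite_induct) auto

lemma minus_cpoly_apply: "((p::cpoly) - q) al be = p al be - q al be"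
  by simp

lemma uminus_cpoly_apply: "(- (p::cpoly)) al be = - p al be"
  by simp

lemma sm_apply[simp]: "sm c p al be = c * p al be" by (simp add: sm_def)

definition lin :: "(cpoly \<Rightarrow> cpoly) \<Rightarrow> bool" where
  "lin L \<longleftrightarrow> (\<forall>p q. L (p + q) = L p + L q) \<and> (\<forall>c p. L (sm c p) = sm c (L p))"

lemma lin_add: "lin L \<Longrightarrow> L (p + q) = L p + L q" by (simp add: lin_def)
lemma lin_sm: "lin L \<Longrightarrow> L (sm c p) = sm c (L p)" by (simp add: lin_def)
lemma lin_zero: "lin L \<Longrightarrow> L 0 = 0"
proof -
  assume "lin L"
  have "L 0 = L (sm 0 0)" by (simp add: sm_def zero_fun_def)
  also have "\<dots> = sm 0 (L 0)" using \<open>lin L\<close> by (rule lin_sm)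
  also have "\<dots> = 0" by (simp add: sm_def zero_fun_def)
  finally show ?thesis .
qed
lemma lin_sum: "lin L \<Longrightarrow> L (\<Sum>i\<in>I. F i) = (\<Sum>i\<in>I. L (F i))"
proof (induction I rule: infinite_finite_induct)
  case (infinite A)
  then show ?case using lin_zero[of L] by (metis sum.infinite)
next
  case empty
  then show ?case using lin_zero[of L] by (simp only: sum.empty)
next
  case (insert x J)
  have "L (sum F (insert x J)) = L (F x + sum F J)"
    by (simp only: sum.insert[OF insert.hyps(1,2)])
  also have "\<dots> = L (F x) + L (sum F J)" by (rule lin_add[OF insert.prems])
  also have "\<dots> = L (F x) + (\<Sum>i\<in>J. L (F i))" using insert.IH insert.prems by simp
  also have "\<dots> = (\<Sum>i\<in>insert x J. L (F i))" by (simp only: sum.insert[OF insert.hyps(1,2)])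
  finally show ?case .
qed
lemma lin_neg: "lin L \<Longrightarrow> L (- p) = - L p"
proof -
  assume "lin L"
  have e: "\<And>q::cpoly. - q = sm (-1) q" by (rule ext)+ (simp add: sm_def)
  have "L (- p) = L (sm (-1) p)" by (simp only: e)
  also have "\<dots> = sm (-1) (L p)" using \<open>lin L\<close> by (rule lin_sm)
  finally show ?thesis by (simp only: e)
qed
lemma lin_diff: "lin L \<Longrightarrow> L (p - q) = L p - L q"
  by (simp only: diff_conv_add_uminus lin_add lin_neg)

lemma lin_comp: "lin L \<Longrightarrow> lin M \<Longrightarrow> lin (\<lambda>p. L (M p))"
  by (simp add: lin_def)

lemma lin_dy: "lin (dy mu)"
  unfolding lin_def by (auto simp: dy_def fun_eq_iff algebra_simps)
lemma lin_da: "lin (da mu)"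
  unfolding lin_def by (auto simp: da_def fun_eq_iff algebra_simps)
lemma lin_xy: "lin (xy mu)"
  unfolding lin_def by (auto simp: xy_def fun_eq_iff)
lemma lin_xa: "lin (xa mu)"
  unfolding lin_def by (auto simp: xa_def fun_eq_iff)
lemma lin_sm_op: "lin (sm c)"
  unfolding lin_def by (auto simp: sm_def fun_eq_iff algebra_simps)

lemma sm_sum: "sm c (\<Sum>i\<in>I. F i) = (\<Sum>i\<in>I. sm c (F i))"
  by (rule lin_sum[OF lin_sm_op])
lemma sm_sm[simp]: "sm c (sm c' p) = sm (c * c') p" by (simp add: sm_def fun_eq_iff)
lemma sm_1[simp]: "sm 1 p = p" by (simp add: sm_def)
lemma sm_0[simp]: "sm 0 p = 0" by (simp add: sm_def fun_eq_iff)
lemma sm_zero[simp]: "sm c 0 = 0" by (simp add: sm_def fun_eq_iff)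
lemma sm_add_left: "sm (a + b) p = sm a p + sm b p" by (simp add: sm_def fun_eq_iff algebra_simps)
lemma sm_add_right: "sm c (p + q) = sm c p + sm c q" by (simp add: sm_def fun_eq_iff algebra_simps)
lemma sm_sum_left: "sm (\<Sum>i\<in>I. f i) p = (\<Sum>i\<in>I. sm (f i) p)"
  by (simp add: fun_eq_iff sum_cpoly_apply sum_distrib_right)

lemma dy_xy: "dy mu (xy nu p) = xy nu (dy mu p) + (if mu = nu then p else 0)"
  by (auto simp: fun_eq_iff dy_def xy_def fun_upd_twist algebra_simps)

lemma da_xa: "da mu (xa nu p) = xa nu (da mu p) + (if mu = nu then p else 0)"
  by (auto simp: fun_eq_iff da_def xa_def fun_upd_twist algebra_simps)

lemma dy_xa: "dy mu (xa nu p) = xa nu (dy mu p)"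
  by (auto simp: fun_eq_iff dy_def xa_def)

lemma da_xy: "da mu (xy nu p) = xy nu (da mu p)"
  by (auto simp: fun_eq_iff da_def xy_def)

lemma dy_dy: "dy mu (dy nu p) = dy nu (dy mu p)"
  by (auto simp: fun_eq_iff dy_def fun_upd_twist)

lemma da_da: "da mu (da nu p) = da nu (da mu p)"
  by (auto simp: fun_eq_iff da_def fun_upd_twist)

lemma dy_da: "dy mu (da nu p) = da nu (dy mu p)"
  by (auto simp: fun_eq_iff dy_def da_def)

lemma xy_xy: "xy mu (xy nu p) = xy nu (xy mu p)"
  by (auto simp: fun_eq_iff xy_def fun_upd_twist)

lemma xa_xa: "xa mu (xa nu p) = xa nu (xa mu p)"
  by (auto simp: fun_eq_iff xa_def fun_upd_twist)

lemma xy_xa: "xy mu (xa nu p) = xa nu (xy mu p)"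
  by (auto simp: fun_eq_iff xy_def xa_def)


lemma dy_add[simp]: "dy mu (p + q) = dy mu p + dy mu q" by (rule lin_add[OF lin_dy])
lemma dy_smul[simp]: "dy mu (sm c p) = sm c (dy mu p)" by (rule lin_sm[OF lin_dy])
lemma dy_sum[simp]: "dy mu (\<Sum>i\<in>I. F i) = (\<Sum>i\<in>I. dy mu (F i))" by (rule lin_sum[OF lin_dy])
lemma dy_zero[simp]: "dy mu 0 = 0" by (rule lin_zero[OF lin_dy])
lemma dy_diff[simp]: "dy mu (p - q) = dy mu p - dy mu q" by (rule lin_diff[OF lin_dy])
lemma dy_neg[simp]: "dy mu (- p) = - dy mu p" by (rule lin_neg[OF lin_dy])

lemma da_add[simp]: "da mu (p + q) = da mu p + da mu q" by (rule lin_add[OF lin_da])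
lemma da_smul[simp]: "da mu (sm c p) = sm c (da mu p)" by (rule lin_sm[OF lin_da])
lemma da_sum[simp]: "da mu (\<Sum>i\<in>I. F i) = (\<Sum>i\<in>I. da mu (F i))" by (rule lin_sum[OF lin_da])
lemma da_zero[simp]: "da mu 0 = 0" by (rule lin_zero[OF lin_da])
lemma da_diff[simp]: "da mu (p - q) = da mu p - da mu q" by (rule lin_diff[OF lin_da])
lemma da_neg[simp]: "da mu (- p) = - da mu p" by (rule lin_neg[OF lin_da])

lemma xy_add[simp]: "xy mu (p + q) = xy mu p + xy mu q" by (rule lin_add[OF lin_xy])
lemma xy_smul[simp]: "xy mu (sm c p) = sm c (xy mu p)" by (rule lin_sm[OF lin_xy])
lemma xy_sum[simp]: "xy mu (\<Sum>i\<in>I. F i) = (\<Sum>i\<in>I. xy mu (F i))" by (rule lin_sum[OF lin_xy])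
lemma xy_zero[simp]: "xy mu 0 = 0" by (rule lin_zero[OF lin_xy])
lemma xy_diff[simp]: "xy mu (p - q) = xy mu p - xy mu q" by (rule lin_diff[OF lin_xy])
lemma xy_neg[simp]: "xy mu (- p) = - xy mu p" by (rule lin_neg[OF lin_xy])

lemma xa_add[simp]: "xa mu (p + q) = xa mu p + xa mu q" by (rule lin_add[OF lin_xa])
lemma xa_smul[simp]: "xa mu (sm c p) = sm c (xa mu p)" by (rule lin_sm[OF lin_xa])
lemma xa_sum[simp]: "xa mu (\<Sum>i\<in>I. F i) = (\<Sum>i\<in>I. xa mu (F i))" by (rule lin_sum[OF lin_xa])
lemma xa_zero[simp]: "xa mu 0 = 0" by (rule lin_zero[OF lin_xa])
lemma xa_diff[simp]: "xa mu (p - q) = xa mu p - xa mu q" by (rule lin_diff[OF lin_xa])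
lemma xa_neg[simp]: "xa mu (- p) = - xa mu p" by (rule lin_neg[OF lin_xa])


lemma sm_add_simp[simp]: "sm c (p + q) = sm c p + sm c q" by (rule sm_add_right)
lemma sm_sum_simp[simp]: "sm c (\<Sum>i\<in>I. F i) = (\<Sum>i\<in>I. sm c (F i))" by (rule sm_sum)
lemma sm_diff_simp[simp]: "sm c (p - q) = sm c p - sm c q" by (rule lin_diff[OF lin_sm_op])
lemma sm_neg_simp[simp]: "sm c (- p) = - sm c p" by (rule lin_neg[OF lin_sm_op])
lemma if_zero_op: "(L::cpoly\<Rightarrow>cpoly) 0 = 0 \<Longrightarrow> L (if P then p else 0) = (if P then L p else 0)" by simp

locale mk =
  fixes d :: nat and eta g :: "nat \<Rightarrow> nat \<Rightarrow> real"
  assumes eta_sym: "\<And>mu nu. mu < d \<Longrightarrow> nu < d \<Longrightarrow> eta mu nu = eta nu mu"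
    and g_sym: "\<And>mu nu. mu < d \<Longrightarrow> nu < d \<Longrightarrow> g mu nu = g nu mu"
    and inv1: "\<And>mu rho. mu < d \<Longrightarrow> rho < d \<Longrightarrow> (\<Sum>nu<d. eta mu nu * g nu rho) = (if mu = rho then 1 else 0)"
begin

lemma inv2: "mu < d \<Longrightarrow> rho < d \<Longrightarrow> (\<Sum>nu<d. g mu nu * eta nu rho) = (if mu = rho then 1 else 0)"
proof -
  assume a: "mu < d" "rho < d"
  have "(\<Sum>nu<d. g mu nu * eta nu rho) = (\<Sum>nu<d. eta rho nu * g nu mu)"
    by (rule sum.cong) (auto simp: a eta_sym g_sym)
  also have "\<dots> = (if rho = mu then 1 else 0)" using a by (simp add: inv1)
  finally show ?thesis by auto
qed

definition yl :: "nat \<Rightarrow> cpoly \<Rightarrow> cpoly" where "yl mu p = (\<Sum>nu<d. sm (g mu nu) (xy nu p))"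
definition alo :: "nat \<Rightarrow> cpoly \<Rightarrow> cpoly" where "alo mu p = (\<Sum>nu<d. sm (g mu nu) (xa nu p))"
definition Dyu :: "nat \<Rightarrow> cpoly \<Rightarrow> cpoly" where "Dyu mu p = (\<Sum>nu<d. sm (eta mu nu) (dy nu p))"
definition Dau :: "nat \<Rightarrow> cpoly \<Rightarrow> cpoly" where "Dau mu p = (\<Sum>nu<d. sm (eta mu nu) (da nu p))"

definition Bx :: "cpoly \<Rightarrow> cpoly" where "Bx p = (\<Sum>mu<d. dy mu (Dyu mu p))"
definition Tt :: "cpoly \<Rightarrow> cpoly" where "Tt p = (\<Sum>mu<d. da mu (Dau mu p))"
definition Ss :: "cpoly \<Rightarrow> cpoly" where "Ss p = (\<Sum>mu<d. da mu (Dyu mu p))"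
definition Y2 :: "cpoly \<Rightarrow> cpoly" where "Y2 p = (\<Sum>mu<d. xy mu (yl mu p))"
definition A2 :: "cpoly \<Rightarrow> cpoly" where "A2 p = (\<Sum>mu<d. xa mu (alo mu p))"
definition YA :: "cpoly \<Rightarrow> cpoly" where "YA p = (\<Sum>mu<d. xy mu (alo mu p))"
definition Ee :: "cpoly \<Rightarrow> cpoly" where "Ee p = (\<Sum>mu<d. xy mu (da mu p))"
definition Ff :: "cpoly \<Rightarrow> cpoly" where "Ff p = (\<Sum>mu<d. xa mu (dy mu p))"
definition Ey :: "cpoly \<Rightarrow> cpoly" where "Ey p = (\<Sum>mu<d. xy mu (dy mu p))"
definition Ea :: "cpoly \<Rightarrow> cpoly" where "Ea p = (\<Sum>mu<d. xa mu (da mu p))"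

lemma lin_yl: "lin (yl mu)" unfolding lin_def yl_def by (simp add: sum.distrib mult.commute)
lemma lin_alo: "lin (alo mu)" unfolding lin_def alo_def by (simp add: sum.distrib mult.commute)
lemma lin_Dyu: "lin (Dyu mu)" unfolding lin_def Dyu_def by (simp add: sum.distrib mult.commute)
lemma lin_Dau: "lin (Dau mu)" unfolding lin_def Dau_def by (simp add: sum.distrib mult.commute)

lemma yl_add[simp]: "yl mu (p + q) = yl mu p + yl mu q" by (rule lin_add[OF lin_yl])
lemma yl_smul[simp]: "yl mu (sm c p) = sm c (yl mu p)" by (rule lin_sm[OF lin_yl])
lemma yl_sum[simp]: "yl mu (\<Sum>i\<in>I. F i) = (\<Sum>i\<in>I. yl mu (F i))" by (rule lin_sum[OF lin_yl])
lemma yl_zero[simp]: "yl mu 0 = 0" by (rule lin_zero[OF lin_yl])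
lemma yl_diff[simp]: "yl mu (p - q) = yl mu p - yl mu q" by (rule lin_diff[OF lin_yl])
lemma yl_neg[simp]: "yl mu (- p) = - yl mu p" by (rule lin_neg[OF lin_yl])

lemma alo_add[simp]: "alo mu (p + q) = alo mu p + alo mu q" by (rule lin_add[OF lin_alo])
lemma alo_smul[simp]: "alo mu (sm c p) = sm c (alo mu p)" by (rule lin_sm[OF lin_alo])
lemma alo_sum[simp]: "alo mu (\<Sum>i\<in>I. F i) = (\<Sum>i\<in>I. alo mu (F i))" by (rule lin_sum[OF lin_alo])
lemma alo_zero[simp]: "alo mu 0 = 0" by (rule lin_zero[OF lin_alo])
lemma alo_diff[simp]: "alo mu (p - q) = alo mu p - alo mu q" by (rule lin_diff[OF lin_alo])
lemma alo_neg[simp]: "alo mu (- p) = - alo mu p" by (rule lin_neg[OF lin_alo])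

lemma Dyu_add[simp]: "Dyu mu (p + q) = Dyu mu p + Dyu mu q" by (rule lin_add[OF lin_Dyu])
lemma Dyu_smul[simp]: "Dyu mu (sm c p) = sm c (Dyu mu p)" by (rule lin_sm[OF lin_Dyu])
lemma Dyu_sum[simp]: "Dyu mu (\<Sum>i\<in>I. F i) = (\<Sum>i\<in>I. Dyu mu (F i))" by (rule lin_sum[OF lin_Dyu])
lemma Dyu_zero[simp]: "Dyu mu 0 = 0" by (rule lin_zero[OF lin_Dyu])
lemma Dyu_diff[simp]: "Dyu mu (p - q) = Dyu mu p - Dyu mu q" by (rule lin_diff[OF lin_Dyu])
lemma Dyu_neg[simp]: "Dyu mu (- p) = - Dyu mu p" by (rule lin_neg[OF lin_Dyu])

lemma Dau_add[simp]: "Dau mu (p + q) = Dau mu p + Dau mu q" by (rule lin_add[OF lin_Dau])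
lemma Dau_smul[simp]: "Dau mu (sm c p) = sm c (Dau mu p)" by (rule lin_sm[OF lin_Dau])
lemma Dau_sum[simp]: "Dau mu (\<Sum>i\<in>I. F i) = (\<Sum>i\<in>I. Dau mu (F i))" by (rule lin_sum[OF lin_Dau])
lemma Dau_zero[simp]: "Dau mu 0 = 0" by (rule lin_zero[OF lin_Dau])
lemma Dau_diff[simp]: "Dau mu (p - q) = Dau mu p - Dau mu q" by (rule lin_diff[OF lin_Dau])
lemma Dau_neg[simp]: "Dau mu (- p) = - Dau mu p" by (rule lin_neg[OF lin_Dau])

lemma lin_Bx: "lin Bx" unfolding lin_def Bx_def by (simp add: sum.distrib mult.commute)

lemma Bx_add[simp]: "Bx (p + q) = Bx p + Bx q" by (rule lin_add[OF lin_Bx])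
lemma Bx_smul[simp]: "Bx (sm c p) = sm c (Bx p)" by (rule lin_sm[OF lin_Bx])
lemma Bx_sum[simp]: "Bx (\<Sum>i\<in>I. F i) = (\<Sum>i\<in>I. Bx (F i))" by (rule lin_sum[OF lin_Bx])
lemma Bx_zero[simp]: "Bx 0 = 0" by (rule lin_zero[OF lin_Bx])
lemma Bx_diff[simp]: "Bx (p - q) = Bx p - Bx q" by (rule lin_diff[OF lin_Bx])
lemma Bx_neg[simp]: "Bx (- p) = - Bx p" by (rule lin_neg[OF lin_Bx])

lemma lin_Tt: "lin Tt" unfolding lin_def Tt_def by (simp add: sum.distrib mult.commute)

lemma Tt_add[simp]: "Tt (p + q) = Tt p + Tt q" by (rule lin_add[OF lin_Tt])
lemma Tt_smul[simp]: "Tt (sm c p) = sm c (Tt p)" by (rule lin_sm[OF lin_Tt])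
lemma Tt_sum[simp]: "Tt (\<Sum>i\<in>I. F i) = (\<Sum>i\<in>I. Tt (F i))" by (rule lin_sum[OF lin_Tt])
lemma Tt_zero[simp]: "Tt 0 = 0" by (rule lin_zero[OF lin_Tt])
lemma Tt_diff[simp]: "Tt (p - q) = Tt p - Tt q" by (rule lin_diff[OF lin_Tt])
lemma Tt_neg[simp]: "Tt (- p) = - Tt p" by (rule lin_neg[OF lin_Tt])

lemma lin_Ss: "lin Ss" unfolding lin_def Ss_def by (simp add: sum.distrib mult.commute)

lemma Ss_add[simp]: "Ss (p + q) = Ss p + Ss q" by (rule lin_add[OF lin_Ss])
lemma Ss_smul[simp]: "Ss (sm c p) = sm c (Ss p)" by (rule lin_sm[OF lin_Ss])
lemma Ss_sum[simp]: "Ss (\<Sum>i\<in>I. F i) = (\<Sum>i\<in>I. Ss (F i))" by (rule lin_sum[OF lin_Ss])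
lemma Ss_zero[simp]: "Ss 0 = 0" by (rule lin_zero[OF lin_Ss])
lemma Ss_diff[simp]: "Ss (p - q) = Ss p - Ss q" by (rule lin_diff[OF lin_Ss])
lemma Ss_neg[simp]: "Ss (- p) = - Ss p" by (rule lin_neg[OF lin_Ss])

lemma lin_Y2: "lin Y2" unfolding lin_def Y2_def by (simp add: sum.distrib mult.commute)

lemma Y2_add[simp]: "Y2 (p + q) = Y2 p + Y2 q" by (rule lin_add[OF lin_Y2])
lemma Y2_smul[simp]: "Y2 (sm c p) = sm c (Y2 p)" by (rule lin_sm[OF lin_Y2])
lemma Y2_sum[simp]: "Y2 (\<Sum>i\<in>I. F i) = (\<Sum>i\<in>I. Y2 (F i))" by (rule lin_sum[OF lin_Y2])
lemma Y2_zero[simp]: "Y2 0 = 0" by (rule lin_zero[OF lin_Y2])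
lemma Y2_diff[simp]: "Y2 (p - q) = Y2 p - Y2 q" by (rule lin_diff[OF lin_Y2])
lemma Y2_neg[simp]: "Y2 (- p) = - Y2 p" by (rule lin_neg[OF lin_Y2])

lemma lin_A2: "lin A2" unfolding lin_def A2_def by (simp add: sum.distrib mult.commute)

lemma A2_add[simp]: "A2 (p + q) = A2 p + A2 q" by (rule lin_add[OF lin_A2])
lemma A2_smul[simp]: "A2 (sm c p) = sm c (A2 p)" by (rule lin_sm[OF lin_A2])
lemma A2_sum[simp]: "A2 (\<Sum>i\<in>I. F i) = (\<Sum>i\<in>I. A2 (F i))" by (rule lin_sum[OF lin_A2])
lemma A2_zero[simp]: "A2 0 = 0" by (rule lin_zero[OF lin_A2])
lemma A2_diff[simp]: "A2 (p - q) = A2 p - A2 q" by (rule lin_diff[OF lin_A2])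
lemma A2_neg[simp]: "A2 (- p) = - A2 p" by (rule lin_neg[OF lin_A2])

lemma lin_YA: "lin YA" unfolding lin_def YA_def by (simp add: sum.distrib mult.commute)

lemma YA_add[simp]: "YA (p + q) = YA p + YA q" by (rule lin_add[OF lin_YA])
lemma YA_smul[simp]: "YA (sm c p) = sm c (YA p)" by (rule lin_sm[OF lin_YA])
lemma YA_sum[simp]: "YA (\<Sum>i\<in>I. F i) = (\<Sum>i\<in>I. YA (F i))" by (rule lin_sum[OF lin_YA])
lemma YA_zero[simp]: "YA 0 = 0" by (rule lin_zero[OF lin_YA])
lemma YA_diff[simp]: "YA (p - q) = YA p - YA q" by (rule lin_diff[OF lin_YA])
lemma YA_neg[simp]: "YA (- p) = - YA p" by (rule lin_neg[OF lin_YA])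

lemma lin_Ee: "lin Ee" unfolding lin_def Ee_def by (simp add: sum.distrib mult.commute)

lemma Ee_add[simp]: "Ee (p + q) = Ee p + Ee q" by (rule lin_add[OF lin_Ee])
lemma Ee_smul[simp]: "Ee (sm c p) = sm c (Ee p)" by (rule lin_sm[OF lin_Ee])
lemma Ee_sum[simp]: "Ee (\<Sum>i\<in>I. F i) = (\<Sum>i\<in>I. Ee (F i))" by (rule lin_sum[OF lin_Ee])
lemma Ee_zero[simp]: "Ee 0 = 0" by (rule lin_zero[OF lin_Ee])
lemma Ee_diff[simp]: "Ee (p - q) = Ee p - Ee q" by (rule lin_diff[OF lin_Ee])
lemma Ee_neg[simp]: "Ee (- p) = - Ee p" by (rule lin_neg[OF lin_Ee])

lemma lin_Ff: "lin Ff" unfolding lin_def Ff_def by (simp add: sum.distrib mult.commute)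

lemma Ff_add[simp]: "Ff (p + q) = Ff p + Ff q" by (rule lin_add[OF lin_Ff])
lemma Ff_smul[simp]: "Ff (sm c p) = sm c (Ff p)" by (rule lin_sm[OF lin_Ff])
lemma Ff_sum[simp]: "Ff (\<Sum>i\<in>I. F i) = (\<Sum>i\<in>I. Ff (F i))" by (rule lin_sum[OF lin_Ff])
lemma Ff_zero[simp]: "Ff 0 = 0" by (rule lin_zero[OF lin_Ff])
lemma Ff_diff[simp]: "Ff (p - q) = Ff p - Ff q" by (rule lin_diff[OF lin_Ff])
lemma Ff_neg[simp]: "Ff (- p) = - Ff p" by (rule lin_neg[OF lin_Ff])

lemma lin_Ey: "lin Ey" unfolding lin_def Ey_def by (simp add: sum.distrib mult.commute)

lemma Ey_add[simp]: "Ey (p + q) = Ey p + Ey q" by (rule lin_add[OF lin_Ey])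
lemma Ey_smul[simp]: "Ey (sm c p) = sm c (Ey p)" by (rule lin_sm[OF lin_Ey])
lemma Ey_sum[simp]: "Ey (\<Sum>i\<in>I. F i) = (\<Sum>i\<in>I. Ey (F i))" by (rule lin_sum[OF lin_Ey])
lemma Ey_zero[simp]: "Ey 0 = 0" by (rule lin_zero[OF lin_Ey])
lemma Ey_diff[simp]: "Ey (p - q) = Ey p - Ey q" by (rule lin_diff[OF lin_Ey])
lemma Ey_neg[simp]: "Ey (- p) = - Ey p" by (rule lin_neg[OF lin_Ey])

lemma lin_Ea: "lin Ea" unfolding lin_def Ea_def by (simp add: sum.distrib mult.commute)

lemma Ea_add[simp]: "Ea (p + q) = Ea p + Ea q" by (rule lin_add[OF lin_Ea])
lemma Ea_smul[simp]: "Ea (sm c p) = sm c (Ea p)" by (rule lin_sm[OF lin_Ea])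
lemma Ea_sum[simp]: "Ea (\<Sum>i\<in>I. F i) = (\<Sum>i\<in>I. Ea (F i))" by (rule lin_sum[OF lin_Ea])
lemma Ea_zero[simp]: "Ea 0 = 0" by (rule lin_zero[OF lin_Ea])
lemma Ea_diff[simp]: "Ea (p - q) = Ea p - Ea q" by (rule lin_diff[OF lin_Ea])
lemma Ea_neg[simp]: "Ea (- p) = - Ea p" by (rule lin_neg[OF lin_Ea])

end


lemma sm_if0[simp]: "sm c (if P then p else 0) = (if P then sm c p else 0)" by simp
lemma xy_if0[simp]: "xy mu (if P then p else 0) = (if P then xy mu p else 0)" by simp
lemma xa_if0[simp]: "xa mu (if P then p else 0) = (if P then xa mu p else 0)" by simp
lemma dy_if0[simp]: "dy mu (if P then p else 0) = (if P then dy mu p else 0)" by simp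
lemma da_if0[simp]: "da mu (if P then p else 0) = (if P then da mu p else 0)" by simp

context mk
begin

lemma dy_yl: "mu < d \<Longrightarrow> dy mu (yl nu p) = yl nu (dy mu p) + sm (g nu mu) p"
  unfolding yl_def by (simp add: dy_xy sum.distrib)

lemma da_alo: "mu < d \<Longrightarrow> da mu (alo nu p) = alo nu (da mu p) + sm (g nu mu) p"
  unfolding alo_def by (simp add: da_xa sum.distrib)

lemma dy_alo: "dy mu (alo nu p) = alo nu (dy mu p)"
  unfolding alo_def by (simp add: dy_xa)

lemma da_yl: "da mu (yl nu p) = yl nu (da mu p)"
  unfolding yl_def by (simp add: da_xy)

lemma Dyu_xy: "nu < d \<Longrightarrow> Dyu mu (xy nu p) = xy nu (Dyu mu p) + sm (eta mu nu) p"
  unfolding Dyu_def by (simp add: dy_xy sum.distrib)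

lemma Dau_xa: "nu < d \<Longrightarrow> Dau mu (xa nu p) = xa nu (Dau mu p) + sm (eta mu nu) p"
  unfolding Dau_def by (simp add: da_xa sum.distrib)

lemma Dyu_xa: "Dyu mu (xa nu p) = xa nu (Dyu mu p)"
  unfolding Dyu_def by (simp add: dy_xa)

lemma Dau_xy: "Dau mu (xy nu p) = xy nu (Dau mu p)"
  unfolding Dau_def by (simp add: da_xy)

lemma Dyu_yl: "mu < d \<Longrightarrow> nu < d \<Longrightarrow> Dyu mu (yl nu p) = yl nu (Dyu mu p) + (if mu = nu then p else 0)"
proof -
  assume a: "mu < d" "nu < d"
  have e: "(\<Sum>r<d. sm (g nu r) (sm (eta mu r) p)) = (if mu = nu then p else 0)"
  proof -
    have "(\<Sum>r<d. sm (g nu r) (sm (eta mu r) p)) = sm (\<Sum>r<d. eta mu r * g r nu) p"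
      by (simp add: sm_sum_left g_sym a mult.commute)
    also have "\<dots> = (if mu = nu then p else 0)" using a by (simp add: inv1)
    finally show ?thesis .
  qed
  have "Dyu mu (yl nu p) = (\<Sum>r<d. sm (g nu r) (Dyu mu (xy r p)))"
    unfolding yl_def by simp
  also have "\<dots> = (\<Sum>r<d. sm (g nu r) (xy r (Dyu mu p))) + (\<Sum>r<d. sm (g nu r) (sm (eta mu r) p))"
    by (simp add: Dyu_xy sum.distrib)
  also have "\<dots> = yl nu (Dyu mu p) + (if mu = nu then p else 0)"
    by (simp only: e yl_def)
  finally show ?thesis .
qed

end


definition cxy :: "(cpoly \<Rightarrow> cpoly) \<Rightarrow> bool" where "cxy L \<longleftrightarrow> (\<forall>nu p. L (xy nu p) = xy nu (L p))"
definition cxa :: "(cpoly \<Rightarrow> cpoly) \<Rightarrow> bool" where "cxa L \<longleftrightarrow> (\<forall>nu p. L (xa nu p) = xa nu (L p))"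
definition cdy :: "(cpoly \<Rightarrow> cpoly) \<Rightarrow> bool" where "cdy L \<longleftrightarrow> (\<forall>nu p. L (dy nu p) = dy nu (L p))"
definition cda :: "(cpoly \<Rightarrow> cpoly) \<Rightarrow> bool" where "cda L \<longleftrightarrow> (\<forall>nu p. L (da nu p) = da nu (L p))"

lemma cxy_xy: "cxy (xy mu)" by (simp add: cxy_def xy_xy)
lemma cxa_xy: "cxa (xy mu)" by (simp add: cxa_def xy_xa)
lemma cda_xy: "cda (xy mu)" by (simp add: cda_def da_xy)
lemma cxy_xa: "cxy (xa mu)" by (simp add: cxy_def xy_xa)
lemma cxa_xa: "cxa (xa mu)" by (simp add: cxa_def xa_xa)
lemma cdy_xa: "cdy (xa mu)" by (simp add: cdy_def dy_xa)
lemma cxa_dy: "cxa (dy mu)" by (simp add: cxa_def dy_xa)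
lemma cdy_dy: "cdy (dy mu)" by (simp add: cdy_def dy_dy)
lemma cda_dy: "cda (dy mu)" by (simp add: cda_def dy_da)
lemma cxy_da: "cxy (da mu)" by (simp add: cxy_def da_xy)
lemma cdy_da: "cdy (da mu)" by (simp add: cdy_def dy_da)
lemma cda_da: "cda (da mu)" by (simp add: cda_def da_da)
lemma cxy_sm: "cxy (sm c)" by (simp add: cxy_def lin_sm[OF lin_xy])
lemma cxa_sm: "cxa (sm c)" by (simp add: cxa_def lin_sm[OF lin_xa])
lemma cdy_sm: "cdy (sm c)" by (simp add: cdy_def lin_sm[OF lin_dy])
lemma cda_sm: "cda (sm c)" by (simp add: cda_def lin_sm[OF lin_da])

context mk
begin

lemma c_yl:
  assumes "lin L" and "cxy L"
  shows "L (yl mu p) = yl mu (L p)"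
  unfolding yl_def cxy_def using assms by (simp add: cxy_def cxa_def cdy_def cda_def lin_sum[OF assms(1)] lin_sm[OF assms(1)])
lemma c_alo:
  assumes "lin L" and "cxa L"
  shows "L (alo mu p) = alo mu (L p)"
  unfolding alo_def cxa_def using assms by (simp add: cxy_def cxa_def cdy_def cda_def lin_sum[OF assms(1)] lin_sm[OF assms(1)])
lemma c_Dyu:
  assumes "lin L" and "cdy L"
  shows "L (Dyu mu p) = Dyu mu (L p)"
  unfolding Dyu_def cdy_def using assms by (simp add: cxy_def cxa_def cdy_def cda_def lin_sum[OF assms(1)] lin_sm[OF assms(1)])
lemma c_Dau:
  assumes "lin L" and "cda L"
  shows "L (Dau mu p) = Dau mu (L p)"
  unfolding Dau_def cda_def using assms by (simp add: cxy_def cxa_def cdy_def cda_def lin_sum[OF assms(1)] lin_sm[OF assms(1)])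

lemma c_Y2:
  assumes "lin L" and "cxy L"
  shows "L (Y2 p) = Y2 (L p)"
  unfolding Y2_def using assms c_yl[of L] by (simp add: cxy_def cxa_def cdy_def cda_def lin_sum[OF assms(1)] cxy_def)
lemma c_A2:
  assumes "lin L" and "cxa L"
  shows "L (A2 p) = A2 (L p)"
  unfolding A2_def using assms c_alo[of L] by (simp add: cxy_def cxa_def cdy_def cda_def lin_sum[OF assms(1)] cxa_def)
lemma c_YA:
  assumes "lin L" and "cxy L" and "cxa L"
  shows "L (YA p) = YA (L p)"
  unfolding YA_def using assms c_alo[of L] by (simp add: cxy_def cxa_def cdy_def cda_def lin_sum[OF assms(1)] cxy_def)
lemma c_Bx:
  assumes "lin L" and "cdy L"
  shows "L (Bx p) = Bx (L p)"
  unfolding Bx_def using assms c_Dyu[of L] by (simp add: cxy_def cxa_def cdy_def cda_def lin_sum[OF assms(1)] cdy_def)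
lemma c_Tt:
  assumes "lin L" and "cda L"
  shows "L (Tt p) = Tt (L p)"
  unfolding Tt_def using assms c_Dau[of L] by (simp add: cxy_def cxa_def cdy_def cda_def lin_sum[OF assms(1)] cda_def)
lemma c_Ss:
  assumes "lin L" and "cdy L" and "cda L"
  shows "L (Ss p) = Ss (L p)"
  unfolding Ss_def using assms c_Dyu[of L] by (simp add: cxy_def cxa_def cdy_def cda_def lin_sum[OF assms(1)] cda_def)
lemma c_Ee:
  assumes "lin L" and "cxy L" and "cda L"
  shows "L (Ee p) = Ee (L p)"
  unfolding Ee_def using assms by (simp add: cxy_def cxa_def cdy_def cda_def lin_sum[OF assms(1)] cda_def cxy_def)
lemma c_Ff:
  assumes "lin L" and "cxa L" and "cdy L"
  shows "L (Ff p) = Ff (L p)"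
  unfolding Ff_def using assms by (simp add: cxy_def cxa_def cdy_def cda_def lin_sum[OF assms(1)] cdy_def cxa_def)
lemma c_Ey:
  assumes "lin L" and "cxy L" and "cdy L"
  shows "L (Ey p) = Ey (L p)"
  unfolding Ey_def using assms by (simp add: cxy_def cxa_def cdy_def cda_def lin_sum[OF assms(1)] cdy_def cxy_def)
lemma c_Ea:
  assumes "lin L" and "cxa L" and "cda L"
  shows "L (Ea p) = Ea (L p)"
  unfolding Ea_def using assms by (simp add: cxy_def cxa_def cdy_def cda_def lin_sum[OF assms(1)] cda_def cxa_def)

end


lemma sm_delta[simp]: "sm (if P then 1 else 0) q = (if P then q else 0)" by simp

lemma sm_two: "p + p = sm 2 p" by (simp add: fun_eq_iff)

context mk
begin

lemma C1b: "mu < d \<Longrightarrow> (\<Sum>nu<d. sm (g nu mu) (xy nu p)) = yl mu p"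
  unfolding yl_def by (rule sum.cong) (auto simp: g_sym)
lemma C1ba: "mu < d \<Longrightarrow> (\<Sum>nu<d. sm (g nu mu) (xa nu p)) = alo mu p"
  unfolding alo_def by (rule sum.cong) (auto simp: g_sym)

lemma C1: "mu < d \<Longrightarrow> (\<Sum>nu<d. sm (eta mu nu) (yl nu p)) = xy mu p"
proof -
  assume a: "mu < d"
  have "(\<Sum>nu<d. sm (eta mu nu) (yl nu p)) = (\<Sum>nu<d. \<Sum>r<d. sm (eta mu nu * g nu r) (xy r p))"
    unfolding yl_def by simp
  also have "\<dots> = (\<Sum>r<d. \<Sum>nu<d. sm (eta mu nu * g nu r) (xy r p))"
    by (rule sum.swap)
  also have "\<dots> = (\<Sum>r<d. sm (\<Sum>nu<d. eta mu nu * g nu r) (xy r p))"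
    by (simp add: sm_sum_left)
  also have "\<dots> = (\<Sum>r<d. sm (if mu = r then 1 else 0) (xy r p))"
    by (rule sum.cong) (auto simp: inv1 a)
  also have "\<dots> = xy mu p" using a by simp
  finally show ?thesis .
qed

lemma C1a: "mu < d \<Longrightarrow> (\<Sum>nu<d. sm (eta mu nu) (alo nu p)) = xa mu p"
proof -
  assume a: "mu < d"
  have "(\<Sum>nu<d. sm (eta mu nu) (alo nu p)) = (\<Sum>nu<d. \<Sum>r<d. sm (eta mu nu * g nu r) (xa r p))"
    unfolding alo_def by simp
  also have "\<dots> = (\<Sum>r<d. \<Sum>nu<d. sm (eta mu nu * g nu r) (xa r p))"
    by (rule sum.swap)
  also have "\<dots> = (\<Sum>r<d. sm (\<Sum>nu<d. eta mu nu * g nu r) (xa r p))"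
    by (simp add: sm_sum_left)
  also have "\<dots> = (\<Sum>r<d. sm (if mu = r then 1 else 0) (xa r p))"
    by (rule sum.cong) (auto simp: inv1 a)
  also have "\<dots> = xa mu p" using a by simp
  finally show ?thesis .
qed

lemma dy_Y2: "mu < d \<Longrightarrow> dy mu (Y2 p) = Y2 (dy mu p) + sm 2 (yl mu p)"
proof -
  assume a: "mu < d"
  have "dy mu (Y2 p) = (\<Sum>nu<d. xy nu (yl nu (dy mu p))) + (\<Sum>nu<d. sm (g nu mu) (xy nu p)) + yl mu p"
    unfolding Y2_def using a by (simp add: dy_xy dy_yl sum.distrib)
  also have "\<dots> = Y2 (dy mu p) + sm 2 (yl mu p)"
    using a by (simp add: C1b Y2_def sm_two add.assoc)
  finally show ?thesis .
qed


lemma da_A2: "mu < d \<Longrightarrow> da mu (A2 p) = A2 (da mu p) + sm 2 (alo mu p)"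
proof -
  assume a: "mu < d"
  have "da mu (A2 p) = (\<Sum>nu<d. xa nu (alo nu (da mu p))) + (\<Sum>nu<d. sm (g nu mu) (xa nu p)) + alo mu p"
    unfolding A2_def using a by (simp add: da_xa da_alo sum.distrib)
  also have "\<dots> = A2 (da mu p) + sm 2 (alo mu p)"
    using a by (simp add: C1ba A2_def sm_two add.assoc)
  finally show ?thesis .
qed

lemma Dyu_Y2: "mu < d \<Longrightarrow> Dyu mu (Y2 p) = Y2 (Dyu mu p) + sm 2 (xy mu p)"
proof -
  assume a: "mu < d"
  have "Dyu mu (Y2 p) = (\<Sum>nu<d. xy nu (yl nu (Dyu mu p))) + xy mu p + (\<Sum>nu<d. sm (eta mu nu) (yl nu p))"
    unfolding Y2_def using a by (simp add: Dyu_xy Dyu_yl sum.distrib)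
  also have "\<dots> = Y2 (Dyu mu p) + sm 2 (xy mu p)"
    using a by (simp add: C1 Y2_def sm_two add.assoc)
  finally show ?thesis .
qed

lemma Dau_alo: "mu < d \<Longrightarrow> nu < d \<Longrightarrow> Dau mu (alo nu p) = alo nu (Dau mu p) + (if mu = nu then p else 0)"
proof -
  assume a: "mu < d" "nu < d"
  have e: "(\<Sum>r<d. sm (g nu r) (sm (eta mu r) p)) = (if mu = nu then p else 0)"
  proof -
    have "(\<Sum>r<d. sm (g nu r) (sm (eta mu r) p)) = sm (\<Sum>r<d. eta mu r * g r nu) p"
      by (simp add: sm_sum_left g_sym a mult.commute)
    also have "\<dots> = (if mu = nu then p else 0)" using a by (simp add: inv1)
    finally show ?thesis .
  qed
  have "Dau mu (alo nu p) = (\<Sum>r<d. sm (g nu r) (Dau mu (xa r p)))"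
    unfolding alo_def by simp
  also have "\<dots> = (\<Sum>r<d. sm (g nu r) (xa r (Dau mu p))) + (\<Sum>r<d. sm (g nu r) (sm (eta mu r) p))"
    by (simp add: Dau_xa sum.distrib)
  also have "\<dots> = alo nu (Dau mu p) + (if mu = nu then p else 0)"
    by (simp only: e alo_def)
  finally show ?thesis .
qed

lemma Dau_A2: "mu < d \<Longrightarrow> Dau mu (A2 p) = A2 (Dau mu p) + sm 2 (xa mu p)"
proof -
  assume a: "mu < d"
  have "Dau mu (A2 p) = (\<Sum>nu<d. xa nu (alo nu (Dau mu p))) + xa mu p + (\<Sum>nu<d. sm (eta mu nu) (alo nu p))"
    unfolding A2_def using a by (simp add: Dau_xa Dau_alo sum.distrib)
  also have "\<dots> = A2 (Dau mu p) + sm 2 (xa mu p)"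
    using a by (simp add: C1a A2_def sm_two add.assoc)
  finally show ?thesis .
qed

lemma dy_YA: "mu < d \<Longrightarrow> dy mu (YA p) = YA (dy mu p) + alo mu p"
  unfolding YA_def by (simp add: dy_xy dy_alo sum.distrib)

lemma da_YA: "mu < d \<Longrightarrow> da mu (YA p) = YA (da mu p) + yl mu p"
proof -
  assume a: "mu < d"
  have "da mu (YA p) = (\<Sum>nu<d. xy nu (alo nu (da mu p))) + (\<Sum>nu<d. sm (g nu mu) (xy nu p))"
    unfolding YA_def using a by (simp add: da_xy da_alo sum.distrib)
  also have "\<dots> = YA (da mu p) + yl mu p"
    using a by (simp add: C1b YA_def)
  finally show ?thesis .
qed

lemma Dyu_alo: "Dyu mu (alo nu p) = alo nu (Dyu mu p)"
  by (rule c_alo[OF lin_Dyu]) (simp add: cxa_def Dyu_xa)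
lemma Dau_yl: "Dau mu (yl nu p) = yl nu (Dau mu p)"
  by (rule c_yl[OF lin_Dau]) (simp add: cxy_def Dau_xy)

lemma Dyu_YA: "mu < d \<Longrightarrow> Dyu mu (YA p) = YA (Dyu mu p) + xa mu p"
proof -
  assume a: "mu < d"
  have "Dyu mu (YA p) = (\<Sum>nu<d. xy nu (alo nu (Dyu mu p))) + (\<Sum>nu<d. sm (eta mu nu) (alo nu p))"
    unfolding YA_def using a by (simp add: Dyu_xy Dyu_alo sum.distrib)
  also have "\<dots> = YA (Dyu mu p) + xa mu p"
    using a by (simp add: C1a YA_def)
  finally show ?thesis .
qed

lemma Dau_YA: "mu < d \<Longrightarrow> Dau mu (YA p) = YA (Dau mu p) + xy mu p"
proof -
  assume a: "mu < d"
  have "Dau mu (YA p) = (\<Sum>nu<d. xy nu (alo nu (Dau mu p))) + xy mu p"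
    unfolding YA_def using a by (simp add: Dau_xy Dau_alo sum.distrib)
  then show ?thesis by (simp add: YA_def)
qed

end


lemma of_nat_times_cpoly[simp]: "(of_nat n :: cpoly) * p = sm (real n) p"
  by (simp add: fun_eq_iff)

context mk
begin

lemma C2gen:
  assumes lx: "\<And>nu. lin (X nu)"
  shows "(\<Sum>mu<d. \<Sum>nu<d. sm (g mu nu) (X nu (\<Sum>r<d. sm (eta mu r) (D r p)))) = (\<Sum>nu<d. X nu (D nu p))"
proof -
  have "(\<Sum>mu<d. \<Sum>nu<d. sm (g mu nu) (X nu (\<Sum>r<d. sm (eta mu r) (D r p))))
      = (\<Sum>mu<d. \<Sum>nu<d. \<Sum>r<d. sm (g mu nu * eta mu r) (X nu (D r p)))"
    by (simp add: lin_sum[OF lx] lin_sm[OF lx])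
  also have "\<dots> = (\<Sum>nu<d. \<Sum>mu<d. \<Sum>r<d. sm (g mu nu * eta mu r) (X nu (D r p)))"
    by (rule sum.swap)
  also have "\<dots> = (\<Sum>nu<d. \<Sum>r<d. \<Sum>mu<d. sm (g mu nu * eta mu r) (X nu (D r p)))"
    by (rule sum.cong[OF refl], rule sum.swap)
  also have "\<dots> = (\<Sum>nu<d. \<Sum>r<d. sm (\<Sum>mu<d. g nu mu * eta mu r) (X nu (D r p)))"
    by (rule sum.cong[OF refl], rule sum.cong[OF refl]) (simp add: sm_sum_left g_sym)
  also have "\<dots> = (\<Sum>nu<d. \<Sum>r<d. (if nu = r then X nu (D r p) else 0))"
    by (rule sum.cong[OF refl], rule sum.cong[OF refl]) (simp add: inv2)
  also have "\<dots> = (\<Sum>nu<d. X nu (D nu p))" by simp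
  finally show ?thesis .
qed

lemma C2_yDy: "(\<Sum>mu<d. yl mu (Dyu mu p)) = Ey p"
  unfolding yl_def Dyu_def Ey_def by (rule C2gen[OF lin_xy])
lemma C2_aDa: "(\<Sum>mu<d. alo mu (Dau mu p)) = Ea p"
  unfolding alo_def Dau_def Ea_def by (rule C2gen[OF lin_xa])
lemma C2_yDa: "(\<Sum>mu<d. yl mu (Dau mu p)) = Ee p"
  unfolding yl_def Dau_def Ee_def by (rule C2gen[OF lin_xy])
lemma C2_aDy: "(\<Sum>mu<d. alo mu (Dyu mu p)) = Ff p"
  unfolding alo_def Dyu_def Ff_def by (rule C2gen[OF lin_xa])

lemma C3_Dyu_da: "(\<Sum>nu<d. Dyu nu (da nu p)) = Ss p"
  unfolding Ss_def Dyu_def by (simp add: dy_da)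
lemma C3_Dau_dy: "(\<Sum>nu<d. Dau nu (dy nu p)) = Ss p"
proof -
  have "(\<Sum>nu<d. Dau nu (dy nu p)) = (\<Sum>nu<d. \<Sum>r<d. sm (eta nu r) (da r (dy nu p)))"
    unfolding Dau_def by simp
  also have "\<dots> = (\<Sum>r<d. \<Sum>nu<d. sm (eta nu r) (da r (dy nu p)))" by (rule sum.swap)
  also have "\<dots> = (\<Sum>r<d. \<Sum>nu<d. sm (eta r nu) (da r (dy nu p)))"
    by (rule sum.cong[OF refl], rule sum.cong[OF refl]) (simp add: eta_sym)
  also have "\<dots> = Ss p" unfolding Ss_def Dyu_def by simp
  finally show ?thesis .
qed
lemma C3_Dyu_dy: "(\<Sum>nu<d. Dyu nu (dy nu p)) = Bx p"
proof -
  have "(\<Sum>nu<d. Dyu nu (dy nu p)) = (\<Sum>nu<d. \<Sum>r<d. sm (eta nu r) (dy r (dy nu p)))"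
    unfolding Dyu_def by simp
  also have "\<dots> = (\<Sum>nu<d. \<Sum>r<d. sm (eta nu r) (dy nu (dy r p)))"
    by (simp add: dy_dy)
  also have "\<dots> = Bx p" unfolding Bx_def Dyu_def by simp
  finally show ?thesis .
qed
lemma C3_Dau_da: "(\<Sum>nu<d. Dau nu (da nu p)) = Tt p"
proof -
  have "(\<Sum>nu<d. Dau nu (da nu p)) = (\<Sum>nu<d. \<Sum>r<d. sm (eta nu r) (da r (da nu p)))"
    unfolding Dau_def by simp
  also have "\<dots> = (\<Sum>nu<d. \<Sum>r<d. sm (eta nu r) (da nu (da r p)))"
    by (simp add: da_da)
  also have "\<dots> = Tt p" unfolding Tt_def Dau_def by simp
  finally show ?thesis .
qed

lemma cxa_Bx: "cxa Bx" unfolding cxa_def using c_Bx[OF lin_xa cdy_xa] by simp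
lemma cdy_Bx: "cdy Bx" unfolding cdy_def using c_Bx[OF lin_dy cdy_dy] by simp
lemma cda_Bx: "cda Bx" unfolding cda_def using c_Bx[OF lin_da cdy_da] by simp
lemma cxy_Tt: "cxy Tt" unfolding cxy_def using c_Tt[OF lin_xy cda_xy] by simp
lemma cdy_Tt: "cdy Tt" unfolding cdy_def using c_Tt[OF lin_dy cda_dy] by simp
lemma cda_Tt: "cda Tt" unfolding cda_def using c_Tt[OF lin_da cda_da] by simp
lemma cdy_Ss: "cdy Ss" unfolding cdy_def using c_Ss[OF lin_dy cdy_dy cda_dy] by simp
lemma cda_Ss: "cda Ss" unfolding cda_def using c_Ss[OF lin_da cdy_da cda_da] by simp

lemma Bx_A2: "Bx (A2 p) = A2 (Bx p)" by (rule c_A2[OF lin_Bx cxa_Bx])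
lemma Tt_Y2: "Tt (Y2 p) = Y2 (Tt p)" by (rule c_Y2[OF lin_Tt cxy_Tt])
lemma Bx_Ff: "Bx (Ff p) = Ff (Bx p)" by (rule c_Ff[OF lin_Bx cxa_Bx cdy_Bx])
lemma Tt_Ee: "Tt (Ee p) = Ee (Tt p)" by (rule c_Ee[OF lin_Tt cxy_Tt cda_Tt])
lemma Bx_Ss: "Bx (Ss p) = Ss (Bx p)" by (rule c_Ss[OF lin_Bx cdy_Bx cda_Bx])
lemma Tt_Ss: "Tt (Ss p) = Ss (Tt p)" by (rule c_Ss[OF lin_Tt cdy_Tt cda_Tt])


lemma Bx_YA: "Bx (YA p) = YA (Bx p) + sm 2 (Ff p)"
proof -
  have "Bx (YA p) = YA (Bx p) + (\<Sum>mu<d. alo mu (Dyu mu p)) + Ff p"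
    unfolding Bx_def Ff_def by (simp add: Dyu_YA dy_YA dy_xa sum.distrib)
  then show ?thesis by (simp add: C2_aDy sm_two add.assoc)
qed

lemma Tt_YA: "Tt (YA p) = YA (Tt p) + sm 2 (Ee p)"
proof -
  have "Tt (YA p) = YA (Tt p) + (\<Sum>mu<d. yl mu (Dau mu p)) + Ee p"
    unfolding Tt_def Ee_def by (simp add: Dau_YA da_YA da_xy sum.distrib)
  then show ?thesis by (simp add: C2_yDa sm_two add.assoc)
qed

lemma Bx_Y2: "Bx (Y2 p) = Y2 (Bx p) + sm 4 (Ey p) + sm (2 * real d) p"
proof -
  have "Bx (Y2 p) = Y2 (Bx p) + sm 2 (\<Sum>mu<d. yl mu (Dyu mu p)) + sm 2 (Ey p) + sm 2 (\<Sum>mu<d. p)"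
    unfolding Bx_def Ey_def by (simp add: Dyu_Y2 dy_Y2 dy_xy sum.distrib) (simp add: fun_eq_iff algebra_simps)
  then show ?thesis by (simp add: C2_yDy fun_eq_iff sum_cpoly_apply algebra_simps)
qed

lemma Tt_A2: "Tt (A2 p) = A2 (Tt p) + sm 4 (Ea p) + sm (2 * real d) p"
proof -
  have "Tt (A2 p) = A2 (Tt p) + sm 2 (\<Sum>mu<d. alo mu (Dau mu p)) + sm 2 (Ea p) + sm 2 (\<Sum>mu<d. p)"
    unfolding Tt_def Ea_def by (simp add: Dau_A2 da_A2 da_xa sum.distrib) (simp add: fun_eq_iff algebra_simps)
  then show ?thesis by (simp add: C2_aDa fun_eq_iff sum_cpoly_apply algebra_simps)
qed

lemma Ss_YA: "Ss (YA p) = YA (Ss p) + Ey p + Ea p + sm (real d) p"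
proof -
  have "Ss (YA p) = YA (Ss p) + (\<Sum>mu<d. yl mu (Dyu mu p)) + Ea p + (\<Sum>mu<d. p)"
    unfolding Ss_def Ea_def by (simp add: Dyu_YA da_YA da_xa sum.distrib)
  then show ?thesis by (simp add: C2_yDy fun_eq_iff sum_cpoly_apply algebra_simps)
qed

lemma da_Y2: "da mu (Y2 p) = Y2 (da mu p)" by (rule c_Y2[OF lin_da cxy_da])
lemma Dyu_A2: "Dyu mu (A2 p) = A2 (Dyu mu p)"
  by (rule c_A2[OF lin_Dyu]) (simp add: cxa_def Dyu_xa)

lemma Ss_Y2: "Ss (Y2 p) = Y2 (Ss p) + sm 2 (Ee p)"
  unfolding Ss_def Ee_def by (simp add: Dyu_Y2 da_Y2 da_xy sum.distrib)

lemma Ss_A2: "Ss (A2 p) = A2 (Ss p) + sm 2 (Ff p)"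
proof -
  have "Ss (A2 p) = A2 (Ss p) + sm 2 (\<Sum>mu<d. alo mu (Dyu mu p))"
    unfolding Ss_def by (simp add: Dyu_A2 da_A2 sum.distrib)
  then show ?thesis by (simp add: C2_aDy)
qed

lemma Bx_xy: "nu < d \<Longrightarrow> Bx (xy nu q) = xy nu (Bx q) + sm 2 (Dyu nu q)"
proof -
  assume a: "nu < d"
  have "Bx (xy nu q) = xy nu (Bx q) + Dyu nu q + (\<Sum>mu<d. sm (eta mu nu) (dy mu q))"
    unfolding Bx_def using a by (simp add: Dyu_xy dy_xy sum.distrib)
  moreover have "(\<Sum>mu<d. sm (eta mu nu) (dy mu q)) = Dyu nu q"
    unfolding Dyu_def by (rule sum.cong) (auto simp: eta_sym a)
  ultimately show ?thesis by (simp add: sm_two add.assoc)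
qed

lemma Tt_xa: "nu < d \<Longrightarrow> Tt (xa nu q) = xa nu (Tt q) + sm 2 (Dau nu q)"
proof -
  assume a: "nu < d"
  have "Tt (xa nu q) = xa nu (Tt q) + Dau nu q + (\<Sum>mu<d. sm (eta mu nu) (da mu q))"
    unfolding Tt_def using a by (simp add: Dau_xa da_xa sum.distrib)
  moreover have "(\<Sum>mu<d. sm (eta mu nu) (da mu q)) = Dau nu q"
    unfolding Dau_def by (rule sum.cong) (auto simp: eta_sym a)
  ultimately show ?thesis by (simp add: sm_two add.assoc)
qed

lemma Bx_Ee: "Bx (Ee p) = Ee (Bx p) + sm 2 (Ss p)"
proof -
  have "Bx (Ee p) = Ee (Bx p) + sm 2 (\<Sum>nu<d. Dyu nu (da nu p))"
    unfolding Ee_def using cda_Bx by (simp add: Bx_xy sum.distrib cda_def)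
  then show ?thesis by (simp add: C3_Dyu_da)
qed

lemma Tt_Ff: "Tt (Ff p) = Ff (Tt p) + sm 2 (Ss p)"
proof -
  have "Tt (Ff p) = Ff (Tt p) + sm 2 (\<Sum>nu<d. Dau nu (dy nu p))"
    unfolding Ff_def using cdy_Tt by (simp add: Tt_xa sum.distrib cdy_def)
  then show ?thesis by (simp add: C3_Dau_dy)
qed

lemma Ss_xa: "nu < d \<Longrightarrow> Ss (xa nu q) = xa nu (Ss q) + Dyu nu q"
  unfolding Ss_def by (simp add: Dyu_xa da_xa sum.distrib)

lemma Ss_xy: "nu < d \<Longrightarrow> Ss (xy nu q) = xy nu (Ss q) + Dau nu q"
proof -
  assume a: "nu < d"
  have "Ss (xy nu q) = xy nu (Ss q) + (\<Sum>mu<d. sm (eta mu nu) (da mu q))"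
    unfolding Ss_def using a by (simp add: Dyu_xy da_xy sum.distrib)
  moreover have "(\<Sum>mu<d. sm (eta mu nu) (da mu q)) = Dau nu q"
    unfolding Dau_def by (rule sum.cong) (auto simp: eta_sym a)
  ultimately show ?thesis by simp
qed

lemma Ss_Ff: "Ss (Ff p) = Ff (Ss p) + Bx p"
proof -
  have "Ss (Ff p) = Ff (Ss p) + (\<Sum>nu<d. Dyu nu (dy nu p))"
    unfolding Ff_def using cdy_Ss by (simp add: Ss_xa sum.distrib cdy_def)
  then show ?thesis by (simp add: C3_Dyu_dy)
qed

lemma Ss_Ee: "Ss (Ee p) = Ee (Ss p) + Tt p"
proof -
  have "Ss (Ee p) = Ee (Ss p) + (\<Sum>nu<d. Dau nu (da nu p))"
    unfolding Ee_def using cda_Ss by (simp add: Ss_xy sum.distrib cda_def)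
  then show ?thesis by (simp add: C3_Dau_da)
qed

lemma xy_A2: "xy mu (A2 p) = A2 (xy mu p)" by (rule c_A2[OF lin_xy cxa_xy])

lemma Ee_A2: "Ee (A2 p) = A2 (Ee p) + sm 2 (YA p)"
  unfolding Ee_def YA_def by (simp add: da_A2 xy_A2 sum.distrib)

lemma Ee_Ff: "Ee (Ff p) = Ff (Ee p) + Ey p - Ea p"
proof -
  have 1: "Ee (Ff p) = (\<Sum>mu<d. \<Sum>nu<d. xy mu (xa nu (da mu (dy nu p)))) + Ey p"
    unfolding Ee_def Ff_def Ey_def by (simp add: da_xa sum.distrib)
  have 2: "Ff (Ee p) = (\<Sum>nu<d. \<Sum>mu<d. xa nu (xy mu (dy nu (da mu p)))) + Ea p"
    unfolding Ee_def Ff_def Ea_def by (simp add: dy_xy sum.distrib)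
  have 3: "(\<Sum>nu<d. \<Sum>mu<d. xa nu (xy mu (dy nu (da mu p)))) = (\<Sum>mu<d. \<Sum>nu<d. xy mu (xa nu (da mu (dy nu p))))"
    by (subst sum.swap) (simp add: xy_xa dy_da)
  show ?thesis using 1 2 3 by (simp add: fun_eq_iff)
qed

end


context mk
begin

definition deg :: "(nat \<Rightarrow> nat) \<Rightarrow> nat" where "deg al = (\<Sum>i<d. al i)"

definition hom :: "int \<Rightarrow> int \<Rightarrow> cpoly \<Rightarrow> bool" where
  "hom m n p \<longleftrightarrow> (\<forall>al be. p al be \<noteq> 0 \<longrightarrow> int (deg al) = m \<and> int (deg be) = n)"

lemma deg_upd: "mu < d \<Longrightarrow> int (deg (al(mu := k))) = int (deg al) - int (al mu) + int k"
proof -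
  assume a: "mu < d"
  have "deg (al(mu := k)) = k + (\<Sum>i\<in>{..<d} - {mu}. (al(mu := k)) i)"
    unfolding deg_def using a by (subst sum.remove[of _ mu]) auto
  also have "(\<Sum>i\<in>{..<d} - {mu}. (al(mu := k)) i) = (\<Sum>i\<in>{..<d} - {mu}. al i)"
    by (rule sum.cong) auto
  finally have 1: "deg (al(mu := k)) = k + (\<Sum>i\<in>{..<d} - {mu}. al i)" .
  have 2: "deg al = al mu + (\<Sum>i\<in>{..<d} - {mu}. al i)"
    unfolding deg_def using a by (subst sum.remove[of _ mu]) auto
  show ?thesis using 1 2 by simp
qed

lemma hom_zero[simp]: "hom m n 0" by (simp add: hom_def)
lemma hom_add: "hom m n p \<Longrightarrow> hom m n q \<Longrightarrow> hom m n (p + q)"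
  by (auto simp: hom_def) (metis add.right_neutral)+
lemma hom_sm: "hom m n p \<Longrightarrow> hom m n (sm c p)" by (auto simp: hom_def)
lemma hom_neg: "hom m n p \<Longrightarrow> hom m n (- p)" by (auto simp: hom_def)
lemma hom_diff: "hom m n p \<Longrightarrow> hom m n q \<Longrightarrow> hom m n (p - q)"
  by (auto simp: hom_def) (metis diff_zero)+
lemma hom_sum: "(\<And>i. i \<in> I \<Longrightarrow> hom m n (F i)) \<Longrightarrow> hom m n (\<Sum>i\<in>I. F i)"
proof (induction I rule: infinite_finite_induct)
  case (insert x J)
  have e: "sum F (insert x J) = F x + sum F J" by (rule sum.insert[OF insert.hyps])
  show ?case unfolding e by (rule hom_add) (use insert in auto)
qed simp_all

lemma hom_xy: "mu < d \<Longrightarrow> hom m n p \<Longrightarrow> hom (m + 1) n (xy mu p)"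
  unfolding hom_def xy_def
proof (intro allI impI)
  fix al be
  assume a: "mu < d" and h: "\<forall>al be. p al be \<noteq> 0 \<longrightarrow> int (deg al) = m \<and> int (deg be) = n"
    and nz: "(if al mu = 0 then 0 else p (al(mu := al mu - 1)) be) \<noteq> 0"
  from nz have pos: "al mu \<noteq> 0" and nz2: "p (al(mu := al mu - 1)) be \<noteq> 0" by (auto split: if_splits)
  from h nz2 have "int (deg (al(mu := al mu - 1))) = m" "int (deg be) = n" by auto
  with deg_upd[OF a, of al "al mu - 1"] pos show "int (deg al) = m + 1 \<and> int (deg be) = n" by simp
qed

lemma hom_xa: "mu < d \<Longrightarrow> hom m n p \<Longrightarrow> hom m (n + 1) (xa mu p)"
  unfolding hom_def xa_def
proof (intro allI impI)
  fix al be
  assume a: "mu < d" and h: "\<forall>al be. p al be \<noteq> 0 \<longrightarrow> int (deg al) = m \<and> int (deg be) = n"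
    and nz: "(if be mu = 0 then 0 else p al (be(mu := be mu - 1))) \<noteq> 0"
  from nz have pos: "be mu \<noteq> 0" and nz2: "p al (be(mu := be mu - 1)) \<noteq> 0" by (auto split: if_splits)
  from h nz2 have "int (deg (be(mu := be mu - 1))) = n" "int (deg al) = m" by auto
  with deg_upd[OF a, of be "be mu - 1"] pos show "int (deg al) = m \<and> int (deg be) = n + 1" by simp
qed

lemma hom_dy: "mu < d \<Longrightarrow> hom m n p \<Longrightarrow> hom (m - 1) n (dy mu p)"
  unfolding hom_def dy_def
proof (intro allI impI)
  fix al be
  assume a: "mu < d" and h: "\<forall>al be. p al be \<noteq> 0 \<longrightarrow> int (deg al) = m \<and> int (deg be) = n"
    and nz: "real (Suc (al mu)) * p (al(mu := Suc (al mu))) be \<noteq> 0"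
  from nz have nz2: "p (al(mu := Suc (al mu))) be \<noteq> 0" by auto
  from h nz2 have "int (deg (al(mu := Suc (al mu)))) = m" "int (deg be) = n" by auto
  with deg_upd[OF a, of al "Suc (al mu)"] show "int (deg al) = m - 1 \<and> int (deg be) = n" by simp
qed

lemma hom_da: "mu < d \<Longrightarrow> hom m n p \<Longrightarrow> hom m (n - 1) (da mu p)"
  unfolding hom_def da_def
proof (intro allI impI)
  fix al be
  assume a: "mu < d" and h: "\<forall>al be. p al be \<noteq> 0 \<longrightarrow> int (deg al) = m \<and> int (deg be) = n"
    and nz: "real (Suc (be mu)) * p al (be(mu := Suc (be mu))) \<noteq> 0"
  from nz have nz2: "p al (be(mu := Suc (be mu))) \<noteq> 0" by auto
  from h nz2 have "int (deg (be(mu := Suc (be mu)))) = n" "int (deg al) = m" by auto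
  with deg_upd[OF a, of be "Suc (be mu)"] show "int (deg al) = m \<and> int (deg be) = n - 1" by simp
qed

lemma hom_yl: "hom m n p \<Longrightarrow> hom (m + 1) n (yl mu p)"
  unfolding yl_def by (auto intro!: hom_sum hom_sm hom_xy)
lemma hom_alo: "hom m n p \<Longrightarrow> hom m (n + 1) (alo mu p)"
  unfolding alo_def by (auto intro!: hom_sum hom_sm hom_xa)
lemma hom_Dyu: "hom m n p \<Longrightarrow> hom (m - 1) n (Dyu mu p)"
  unfolding Dyu_def by (auto intro!: hom_sum hom_sm hom_dy)
lemma hom_Dau: "hom m n p \<Longrightarrow> hom m (n - 1) (Dau mu p)"
  unfolding Dau_def by (auto intro!: hom_sum hom_sm hom_da)

lemma hom_Y2: "hom m n p \<Longrightarrow> hom (m + 2) n (Y2 p)"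
  unfolding Y2_def using hom_xy[of _ "m + 1" n] hom_yl[of m n p]
  by (auto intro!: hom_sum simp: add.assoc)
lemma hom_A2: "hom m n p \<Longrightarrow> hom m (n + 2) (A2 p)"
  unfolding A2_def using hom_xa[of _ m "n + 1"] hom_alo[of m n p]
  by (auto intro!: hom_sum simp: add.assoc)
lemma hom_YA: "hom m n p \<Longrightarrow> hom (m + 1) (n + 1) (YA p)"
  unfolding YA_def using hom_xy[of _ m "n + 1"] hom_alo[of m n p]
  by (auto intro!: hom_sum)
lemma hom_Ee: "hom m n p \<Longrightarrow> hom (m + 1) (n - 1) (Ee p)"
  unfolding Ee_def using hom_xy[of _ m "n - 1"] hom_da[of _ m n p]
  by (auto intro!: hom_sum)
lemma hom_Ff: "hom m n p \<Longrightarrow> hom (m - 1) (n + 1) (Ff p)"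
  unfolding Ff_def using hom_xa[of _ "m - 1" n] hom_dy[of _ m n p]
  by (auto intro!: hom_sum)
lemma hom_Ss: "hom m n p \<Longrightarrow> hom (m - 1) (n - 1) (Ss p)"
  unfolding Ss_def using hom_da[of _ "m - 1" n] hom_Dyu[of m n p]
  by (auto intro!: hom_sum)
lemma hom_Bx: "hom m n p \<Longrightarrow> hom (m - 2) n (Bx p)"
  unfolding Bx_def using hom_dy[of _ "m - 1" n] hom_Dyu[of m n p]
  by (auto intro!: hom_sum simp: diff_diff_eq)
lemma hom_Tt: "hom m n p \<Longrightarrow> hom m (n - 2) (Tt p)"
  unfolding Tt_def using hom_da[of _ m "n - 1"] hom_Dau[of m n p]
  by (auto intro!: hom_sum simp: diff_diff_eq)

lemma xy_dy_apply: "xy mu (dy mu p) al be = real (al mu) * p al be"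
  by (auto simp: xy_def dy_def)
lemma xa_da_apply: "xa mu (da mu p) al be = real (be mu) * p al be"
  by (auto simp: xa_def da_def)

lemma Ey_apply: "Ey p al be = real (deg al) * p al be"
  unfolding Ey_def deg_def by (simp add: sum_cpoly_apply xy_dy_apply sum_distrib_right)
lemma Ea_apply: "Ea p al be = real (deg be) * p al be"
  unfolding Ea_def deg_def by (simp add: sum_cpoly_apply xa_da_apply sum_distrib_right)

lemma Ey_hom: "hom m n p \<Longrightarrow> Ey p = sm (of_int m) p"
proof (rule ext, rule ext)
  fix al be assume h: "hom m n p"
  show "Ey p al be = sm (of_int m) p al be"
  proof (cases "p al be = 0")
    case False
    with h have "int (deg al) = m" by (auto simp: hom_def)
    then have "real (deg al) = of_int m" by (metis of_int_of_nat_eq)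
    then show ?thesis by (simp add: Ey_apply)
  qed (simp add: Ey_apply)
qed

lemma Ea_hom: "hom m n p \<Longrightarrow> Ea p = sm (of_int n) p"
proof (rule ext, rule ext)
  fix al be assume h: "hom m n p"
  show "Ea p al be = sm (of_int n) p al be"
  proof (cases "p al be = 0")
    case False
    with h have "int (deg be) = n" by (auto simp: hom_def)
    then have "real (deg be) = of_int n" by (metis of_int_of_nat_eq)
    then show ?thesis by (simp add: Ea_apply)
  qed (simp add: Ea_apply)
qed

end


context mk
begin

definition vars :: "cpoly \<Rightarrow> bool" where
  "vars p \<longleftrightarrow> (\<forall>al be. p al be \<noteq> 0 \<longrightarrow> (\<forall>i. d \<le> i \<longrightarrow> al i = 0 \<and> be i = 0))"

lemma vars_zero[simp]: "vars 0" by (simp add: vars_def)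
lemma vars_add: "vars p \<Longrightarrow> vars q \<Longrightarrow> vars (p + q)"
  unfolding vars_def by (metis add.right_neutral add_0 plus_fun_apply)
lemma vars_sm: "vars p \<Longrightarrow> vars (sm c p)" by (auto simp: vars_def)
lemma vars_neg: "vars p \<Longrightarrow> vars (- p)" by (auto simp: vars_def)
lemma vars_diff: "vars p \<Longrightarrow> vars q \<Longrightarrow> vars (p - q)"
  unfolding vars_def by (metis diff_self diff_zero minus_cpoly_apply)
lemma vars_sum: "(\<And>i. i \<in> I \<Longrightarrow> vars (F i)) \<Longrightarrow> vars (\<Sum>i\<in>I. F i)"
proof (induction I rule: infinite_finite_induct)
  case (insert x J)
  have e: "sum F (insert x J) = F x + sum F J" by (rule sum.insert[OF insert.hyps])
  show ?case unfolding e by (rule vars_add) (use insert in auto)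
qed simp_all

lemma vars_xy: "mu < d \<Longrightarrow> vars p \<Longrightarrow> vars (xy mu p)"
  unfolding vars_def xy_def
  by (auto split: if_splits) (metis fun_upd_apply not_le)+

lemma vars_xa: "mu < d \<Longrightarrow> vars p \<Longrightarrow> vars (xa mu p)"
  unfolding vars_def xa_def
  by (auto split: if_splits) (metis fun_upd_apply not_le)+

lemma vars_dy: "vars p \<Longrightarrow> vars (dy mu p)"
  unfolding vars_def dy_def
  by auto (metis fun_upd_apply nat.distinct(1))+

lemma vars_da: "vars p \<Longrightarrow> vars (da mu p)"
  unfolding vars_def da_def
  by auto (metis fun_upd_apply nat.distinct(1))+

lemma vars_yl: "vars p \<Longrightarrow> vars (yl mu p)"
  unfolding yl_def by (auto intro!: vars_sum vars_sm vars_xy)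
lemma vars_alo: "vars p \<Longrightarrow> vars (alo mu p)"
  unfolding alo_def by (auto intro!: vars_sum vars_sm vars_xa)
lemma vars_Dyu: "vars p \<Longrightarrow> vars (Dyu mu p)"
  unfolding Dyu_def by (auto intro!: vars_sum vars_sm vars_dy)
lemma vars_Dau: "vars p \<Longrightarrow> vars (Dau mu p)"
  unfolding Dau_def by (auto intro!: vars_sum vars_sm vars_da)
lemma vars_Y2: "vars p \<Longrightarrow> vars (Y2 p)"
  unfolding Y2_def by (auto intro!: vars_sum vars_xy vars_yl)
lemma vars_A2: "vars p \<Longrightarrow> vars (A2 p)"
  unfolding A2_def by (auto intro!: vars_sum vars_xa vars_alo)
lemma vars_YA: "vars p \<Longrightarrow> vars (YA p)"
  unfolding YA_def by (auto intro!: vars_sum vars_xy vars_alo)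
lemma vars_Ee: "vars p \<Longrightarrow> vars (Ee p)"
  unfolding Ee_def by (auto intro!: vars_sum vars_xy vars_da)
lemma vars_Ff: "vars p \<Longrightarrow> vars (Ff p)"
  unfolding Ff_def by (auto intro!: vars_sum vars_xa vars_dy)
lemma vars_Ss: "vars p \<Longrightarrow> vars (Ss p)"
  unfolding Ss_def by (auto intro!: vars_sum vars_da vars_Dyu)

lemma hom_neg_zero: "hom m n p \<Longrightarrow> m < 0 \<or> n < 0 \<Longrightarrow> p = 0"
  unfolding hom_def by (rule ext, rule ext) (metis of_nat_0_le_iff not_less zero_fun_apply)

end


type_synonym prm = "real \<times> real \<times> real \<times> real \<times> real \<times> real \<times> real"

context mk
begin

definition cc :: "int \<Rightarrow> real" where "cc m = 2 * of_int m + real d - 2"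

definition Xop :: "real \<Rightarrow> real \<Rightarrow> real \<Rightarrow> real \<Rightarrow> cpoly \<Rightarrow> cpoly" where
  "Xop x1 x2 x3 x4 s = sm x1 (YA s) + sm x2 (Y2 (Ff s)) + sm x3 (A2 (Ee s)) + sm x4 (Y2 (A2 (Ss s)))"

fun Psi :: "prm \<Rightarrow> cpoly \<Rightarrow> cpoly" where
  "Psi (A, B1, B2, x1, x2, x3, x4) f = sm A f - sm B1 (Ee (Ff f)) - sm B2 (Ff (Ee f)) + Xop x1 x2 x3 x4 (Ss f)"

fun nxt :: "int \<Rightarrow> int \<Rightarrow> prm \<Rightarrow> prm" where
  "nxt m n (A, B1, B2, x1, x2, x3, x4) =
     (A - 2 * B1 - 2 * B2 + (of_int m + of_int n - 2 + real d) * x1, B1 - 2 * x2, B2 - 2 * x3,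
      x1 + 4 * x4, x2 + 2 * x4, x3 + 2 * x4, x4)"

lemma S_Xop:
  assumes h: "hom m n s" and b: "Bx s = 0" and t: "Tt s = 0"
  shows "Ss (Xop x1 x2 x3 x4 s) =
    Psi ((of_int m + of_int n + real d) * x1, - 2 * x2, - 2 * x3, x1 + 4 * x4, x2 + 2 * x4, x3 + 2 * x4, x4) s"
  using b t
  by (simp add: Xop_def Ss_YA Ss_Y2 Ss_A2 Ss_Ff Ss_Ee Ee_A2 Ey_hom[OF h] Ea_hom[OF h])
     (simp add: fun_eq_iff algebra_simps)

lemma S_EF:
  assumes b: "Bx f = 0" and t: "Tt f = 0"
  shows "Ss (Ee (Ff f)) = Ee (Ff (Ss f)) + sm 2 (Ss f)"
    and "Ss (Ff (Ee f)) = Ff (Ee (Ss f)) + sm 2 (Ss f)"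
  using b t by (simp_all add: Ss_Ee Ss_Ff Tt_Ff Bx_Ee)

lemma Bx_Ss0: "Bx f = 0 \<Longrightarrow> Bx (Ss f) = 0" by (simp add: Bx_Ss)
lemma Tt_Ss0: "Tt f = 0 \<Longrightarrow> Tt (Ss f) = 0" by (simp add: Tt_Ss)

lemma S_Psi:
  assumes h: "hom m n f" and b: "Bx f = 0" and t: "Tt f = 0"
  shows "Ss (Psi c f) = Psi (nxt m n c) (Ss f)"
proof -
  obtain A B1 B2 x1 x2 x3 x4 where c: "c = (A, B1, B2, x1, x2, x3, x4)" by (cases c) auto
  have hs: "hom (m - 1) (n - 1) (Ss f)" by (rule hom_Ss[OF h])
  have X: "Ss (Xop x1 x2 x3 x4 (Ss f)) = Psi ((of_int (m - 1) + of_int (n - 1) + real d) * x1, - 2 * x2, - 2 * x3, x1 + 4 * x4, x2 + 2 * x4, x3 + 2 * x4, x4) (Ss f)"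
    by (rule S_Xop[OF hs Bx_Ss0[OF b] Tt_Ss0[OF t]])
  show ?thesis unfolding c using X
    by (simp add: S_EF[OF b t]) (simp add: fun_eq_iff algebra_simps)
qed


definition Phi :: "int \<Rightarrow> int \<Rightarrow> cpoly \<Rightarrow> cpoly" where
  "Phi m n f = Xop 1 (- 1 / cc m) (- 1 / cc n) (1 / (cc m * cc n)) f"

lemma Phi_Bx:
  assumes h: "hom m n f" and b: "Bx f = 0" and t: "Tt f = 0" and cm: "cc m \<noteq> 0" and cn: "cc n \<noteq> 0"
  shows "Bx (Phi m n f) = 0"
proof -
  have e1: "Ey (Ff f) = sm (of_int (m - 1)) (Ff f)" by (rule Ey_hom[OF hom_Ff[OF h]])
  have e2: "Ey (A2 (Ss f)) = sm (of_int (m - 1)) (A2 (Ss f))" by (rule Ey_hom[OF hom_A2[OF hom_Ss[OF h]]])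
  have "Bx (Phi m n f) = sm (2 - (4 * of_int (m - 1) + 2 * real d) / cc m) (Ff f)
      + sm ((4 * of_int (m - 1) + 2 * real d) / (cc m * cc n) - 2 / cc n) (A2 (Ss f))"
    using b by (simp add: Phi_def Xop_def Bx_YA Bx_Y2 Bx_A2 Bx_Ee Bx_Ff Bx_Ss e1 e2)
      (simp add: fun_eq_iff algebra_simps add_divide_distrib diff_divide_distrib)
  also have "2 - (4 * of_int (m - 1) + 2 * real d) / cc m = 0"
    using cm by (simp add: cc_def field_simps)
  also have "(4 * of_int (m - 1) + 2 * real d) / (cc m * cc n) - 2 / cc n = 0"
  proof -
    have "4 * of_int (m - 1) + 2 * real d = 2 * cc m" by (simp add: cc_def algebra_simps)
    then show ?thesis using cm cn by simp
  qed
  finally show ?thesis by (simp add: fun_eq_iff)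
qed

lemma Phi_Tt:
  assumes h: "hom m n f" and b: "Bx f = 0" and t: "Tt f = 0" and cm: "cc m \<noteq> 0" and cn: "cc n \<noteq> 0"
  shows "Tt (Phi m n f) = 0"
proof -
  have e1: "Ea (Ee f) = sm (of_int (n - 1)) (Ee f)" by (rule Ea_hom[OF hom_Ee[OF h]])
  have e2: "Ea (Ss f) = sm (of_int (n - 1)) (Ss f)" by (rule Ea_hom[OF hom_Ss[OF h]])
  have "Tt (Phi m n f) = sm (2 - (4 * of_int (n - 1) + 2 * real d) / cc n) (Ee f)
      + sm ((4 * of_int (n - 1) + 2 * real d) / (cc m * cc n) - 2 / cc m) (Y2 (Ss f))"
    using t by (simp add: Phi_def Xop_def Tt_YA Tt_Y2 Tt_A2 Tt_Ee Tt_Ff Tt_Ss e1 e2)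
      (simp add: fun_eq_iff algebra_simps add_divide_distrib diff_divide_distrib)
  also have "2 - (4 * of_int (n - 1) + 2 * real d) / cc n = 0"
    using cn by (simp add: cc_def field_simps)
  also have "(4 * of_int (n - 1) + 2 * real d) / (cc m * cc n) - 2 / cc m = 0"
  proof -
    have "4 * of_int (n - 1) + 2 * real d = 2 * cc n" by (simp add: cc_def algebra_simps)
    then show ?thesis using cm cn by simp
  qed
  finally show ?thesis by (simp add: fun_eq_iff)
qed

definition c0 :: "int \<Rightarrow> int \<Rightarrow> prm" where
  "c0 m n = (of_int m + of_int n + real d, 2 / cc m, 2 / cc n, 1 + 4 / (cc m * cc n),
     - 1 / cc m + 2 / (cc m * cc n), - 1 / cc n + 2 / (cc m * cc n), 1 / (cc m * cc n))"

lemma S_Phi: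
  assumes h: "hom m n f" and b: "Bx f = 0" and t: "Tt f = 0"
  shows "Ss (Phi m n f) = Psi (c0 m n) f"
proof -
  have "Ss (Phi m n f) = Psi ((of_int m + of_int n + real d) * 1, - 2 * (- 1 / cc m), - 2 * (- 1 / cc n),
      1 + 4 * (1 / (cc m * cc n)), (- 1 / cc m) + 2 * (1 / (cc m * cc n)),
      (- 1 / cc n) + 2 * (1 / (cc m * cc n)), 1 / (cc m * cc n)) f"
    unfolding Phi_def by (rule S_Xop[OF h b t])
  also have "((of_int m + of_int n + real d) * 1, - 2 * (- 1 / cc m), - 2 * (- 1 / cc n),
      1 + 4 * (1 / (cc m * cc n)), (- 1 / cc m) + 2 * (1 / (cc m * cc n)),
      (- 1 / cc n) + 2 * (1 / (cc m * cc n)), 1 / (cc m * cc n)) = c0 m n"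
    by (simp add: c0_def)
  finally show ?thesis .
qed

end


context mk
begin

definition rt :: "int \<Rightarrow> int \<Rightarrow> nat \<Rightarrow> real" where
  "rt m n t = (real t + 1) * (of_int m - of_int n + real t)"

fun PP :: "int \<Rightarrow> int \<Rightarrow> nat \<Rightarrow> cpoly \<Rightarrow> cpoly" where
  "PP m n 0 p = p"
| "PP m n (Suc k) p = Ee (Ff (PP m n k p)) - sm (rt m n k) (PP m n k p)"

lemma hom_EF: "hom m n p \<Longrightarrow> hom m n (Ee (Ff p))"
  using hom_Ee[OF hom_Ff, of m n p] by simp

lemma hom_PP: "hom m n p \<Longrightarrow> hom m n (PP m' n' k p)"
  by (induction k) (auto intro!: hom_diff hom_sm hom_EF)

lemma EF_hom: "hom m n q \<Longrightarrow> Ee (Ff q) = Ff (Ee q) + sm (of_int m - of_int n) q"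
  by (simp add: Ee_Ff Ey_hom Ea_hom fun_eq_iff algebra_simps)

lemma PP_shift:
  assumes h: "hom m (n + 1) p"
  shows "PP m (n + 1) (Suc k) p = Ff (PP (m + 1) n k (Ee p))"
proof (induction k)
  case 0
  show ?case using EF_hom[OF h] by (simp add: rt_def fun_eq_iff)
next
  case (Suc k)
  define q where "q = PP (m + 1) n k (Ee p)"
  have hq: "hom (m + 1) n q" unfolding q_def
    by (rule hom_PP) (use hom_Ee[OF h] in simp)
  have hfq: "hom m (n + 1) (Ff q)" using hom_Ff[OF hq] by simp
  have eq: "Ee (Ff (Ff q)) = Ff (Ee (Ff q)) + sm (of_int m - of_int (n + 1)) (Ff q)"
    by (rule EF_hom[OF hfq])
  have r: "rt m (n + 1) (Suc k) = rt (m + 1) n k + (of_int m - of_int (n + 1))"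
    by (simp add: rt_def algebra_simps)
  have key: "Ee (Ff (Ff q)) - sm (rt m (n + 1) (Suc k)) (Ff q) = Ff (Ee (Ff q) - sm (rt (m + 1) n k) q)"
    unfolding r eq by (simp add: fun_eq_iff algebra_simps)
  have "PP m (n + 1) (Suc (Suc k)) p = Ee (Ff (PP m (n + 1) (Suc k) p)) - sm (rt m (n + 1) (Suc k)) (PP m (n + 1) (Suc k) p)"
    by (simp only: PP.simps)
  also have "\<dots> = Ee (Ff (Ff q)) - sm (rt m (n + 1) (Suc k)) (Ff q)"
    by (simp only: Suc.IH q_def)
  also have "\<dots> = Ff (Ee (Ff q) - sm (rt (m + 1) n k) q)" by (rule key)
  also have "\<dots> = Ff (PP (m + 1) n (Suc k) (Ee p))" by (simp only: PP.simps q_def)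
  finally show ?case .
qed

lemma PP_zero: "hom m (int n) p \<Longrightarrow> PP m (int n) (Suc n) p = 0"
proof (induction n arbitrary: m p)
  case 0
  have z: "Ee p = 0" by (rule hom_neg_zero[OF hom_Ee[OF 0[simplified]]]) simp
  show ?case using EF_hom[OF 0[simplified]] z by (simp add: rt_def fun_eq_iff)
next
  case (Suc n)
  have h: "hom m (int n + 1) p" using Suc.prems by (simp add: add.commute)
  have he: "hom (m + 1) (int n) (Ee p)" using hom_Ee[OF h] by simp
  have "PP m (int n + 1) (Suc (Suc n)) p = Ff (PP (m + 1) (int n) (Suc n) (Ee p))"
    by (rule PP_shift[OF h])
  also have "\<dots> = 0" by (simp only: Suc.IH[OF he] Ff_zero)
  finally have "PP m (int n + 1) (Suc (Suc n)) p = 0" .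
  moreover have "int (Suc n) = int n + 1" by simp
  ultimately show ?case by (simp only:)
qed

lemma PP_eig:
  assumes e: "Ee (Ff f) = sm kap f"
  shows "PP m n k f = sm (\<Prod>t<k. (kap - rt m n t)) f"
proof (induction k)
  case 0
  then show ?case by (simp add: fun_eq_iff)
next
  case (Suc k)
  have "PP m n (Suc k) f = Ee (Ff (PP m n k f)) - sm (rt m n k) (PP m n k f)" by (simp only: PP.simps)
  also have "\<dots> = sm (\<Prod>t<k. (kap - rt m n t)) (Ee (Ff f)) - sm (rt m n k) (sm (\<Prod>t<k. (kap - rt m n t)) f)"
    by (simp only: Suc.IH Ee_smul Ff_smul)
  also have "\<dots> = sm (\<Prod>t<Suc k. (kap - rt m n t)) f"
    unfolding e by (simp add: fun_eq_iff algebra_simps)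
  finally show ?case .
qed

lemma spectral:
  assumes h: "hom m (int n) f" and e: "Ee (Ff f) = sm kap f" and ne: "\<And>t. t \<le> n \<Longrightarrow> kap \<noteq> rt m (int n) t"
  shows "f = 0"
proof -
  have "sm (\<Prod>t<Suc n. (kap - rt m (int n) t)) f = 0"
    using PP_zero[OF h] PP_eig[OF e, of m "int n" "Suc n"] by simp
  moreover have "(\<Prod>t<Suc n. (kap - rt m (int n) t)) \<noteq> 0"
    using ne by (auto simp: less_Suc_eq_le)
  ultimately show ?thesis by (auto simp: fun_eq_iff)
qed

end


context mk
begin

fun itr :: "prm \<Rightarrow> int \<Rightarrow> int \<Rightarrow> nat \<Rightarrow> prm" where
  "itr c m n 0 = c"
| "itr c m n (Suc k) = itr (nxt m n c) (m - 1) (n - 1) k"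

fun val :: "prm \<Rightarrow> int \<Rightarrow> int \<Rightarrow> nat \<Rightarrow> real" where
  "val (A, B1, B2, x1, x2, x3, x4) m n t = A + B2 * (of_int m - of_int n) - (B1 + B2) * rt m n t"

definition goodc :: "prm \<Rightarrow> nat \<Rightarrow> nat \<Rightarrow> bool" where
  "goodc c m n \<longleftrightarrow> (\<forall>k t. k \<le> m \<longrightarrow> k \<le> n \<longrightarrow> t \<le> n - k \<longrightarrow>
      val (itr c (int m) (int n) k) (int m - int k) (int n - int k) t \<noteq> 0)"

lemma Xop_zero: "Xop x1 x2 x3 x4 0 = 0" by (simp add: Xop_def)

lemma base_case:
  assumes h: "hom (int m) (int n) f" and s: "Ss f = 0" and p: "Psi c f = 0"
    and v: "\<And>t. t \<le> n \<Longrightarrow> val c (int m) (int n) t \<noteq> 0"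
  shows "f = 0"
proof -
  obtain A B1 B2 x1 x2 x3 x4 where c: "c = (A, B1, B2, x1, x2, x3, x4)" by (cases c) auto
  have fe: "Ff (Ee f) = Ee (Ff f) - sm (of_int (int m) - of_int (int n)) f"
    using EF_hom[OF h] by (simp add: fun_eq_iff)
  from p have "sm A f - sm B1 (Ee (Ff f)) - sm B2 (Ff (Ee f)) = 0"
    by (simp add: c s Xop_zero)
  then have eq: "sm (A + B2 * (of_int (int m) - of_int (int n))) f = sm (B1 + B2) (Ee (Ff f))"
    unfolding fe by (simp add: fun_eq_iff algebra_simps)
  show ?thesis
  proof (cases "B1 + B2 = 0")
    case True
    have "val c (int m) (int n) 0 \<noteq> 0" by (rule v) simp
    then have nz: "A + B2 * (of_int (int m) - of_int (int n)) \<noteq> 0" using True by (simp add: c)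
    from eq True have "sm (A + B2 * (of_int (int m) - of_int (int n))) f = 0" by (simp add: fun_eq_iff)
    with nz show ?thesis by (simp add: fun_eq_iff)
  next
    case False
    define kap where "kap = (A + B2 * (of_int (int m) - of_int (int n))) / (B1 + B2)"
    have e: "Ee (Ff f) = sm kap f"
      using eq False unfolding kap_def by (simp add: fun_eq_iff field_simps)
    show ?thesis
    proof (rule spectral[OF h e])
      fix t assume "t \<le> n"
      from v[OF this] have "A + B2 * (of_int (int m) - of_int (int n)) - (B1 + B2) * rt (int m) (int n) t \<noteq> 0"
        by (simp add: c)
      then show "kap \<noteq> rt (int m) (int n) t" using False unfolding kap_def by (auto simp: field_simps)
    qed
  qed
qed

lemma injective:
  "hom (int m) (int n) f \<Longrightarrow> Bx f = 0 \<Longrightarrow> Tt f = 0 \<Longrightarrow> Psi c f = 0 \<Longrightarrow> goodc c m n \<Longrightarrow> f = 0"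
proof (induction n arbitrary: m c f)
  case 0
  have s: "Ss f = 0" by (rule hom_neg_zero[OF hom_Ss[OF "0.prems"(1)]]) simp
  show ?case
  proof (rule base_case[OF "0.prems"(1) s "0.prems"(4)])
    fix t assume "t \<le> (0::nat)"
    with "0.prems"(5)[unfolded goodc_def, rule_format, of 0 t] show "val c (int m) (int 0) t \<noteq> 0" by simp
  qed
next
  case (Suc n)
  have s: "Ss f = 0"
  proof (cases m)
    case 0
    then show ?thesis by (intro hom_neg_zero[OF hom_Ss[OF Suc.prems(1)]]) simp
  next
    case (Suc m')
    have hs: "hom (int m') (int n) (Ss f)" using hom_Ss[OF Suc.prems(1)] Suc by simp
    have "Psi (nxt (int m) (int (Suc n)) c) (Ss f) = Ss (Psi c f)"
      by (rule sym, rule S_Psi[OF Suc.prems(1-3)])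
    also have "\<dots> = Ss 0" by (simp only: Suc.prems(4))
    also have "\<dots> = 0" by (rule Ss_zero)
    finally have ps: "Psi (nxt (int m) (int (Suc n)) c) (Ss f) = 0" .
    have g: "goodc (nxt (int m) (int (Suc n)) c) m' n"
      unfolding goodc_def
    proof (intro allI impI)
      fix k t assume k1: "k \<le> m'" and k2: "k \<le> n" and t: "t \<le> n - k"
      have "val (itr c (int m) (int (Suc n)) (Suc k)) (int m - int (Suc k)) (int (Suc n) - int (Suc k)) t \<noteq> 0"
        using Suc.prems(5)[unfolded goodc_def, rule_format, of "Suc k" t] k1 k2 t \<open>m = Suc m'\<close> by simp
      moreover have "int m - 1 = int m'" "int (Suc n) - 1 = int n" using \<open>m = Suc m'\<close> by simp_all
      ultimately show "val (itr (nxt (int m) (int (Suc n)) c) (int m') (int n) k) (int m' - int k) (int n - int k) t \<noteq> 0"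
        using \<open>m = Suc m'\<close> by simp
    qed
    show ?thesis
      by (rule Suc.IH[OF hs Bx_Ss0[OF Suc.prems(2)] Tt_Ss0[OF Suc.prems(3)] ps g])
  qed
  show ?case
  proof (rule base_case[OF Suc.prems(1) s Suc.prems(4)])
    fix t assume "t \<le> Suc n"
    with Suc.prems(5)[unfolded goodc_def, rule_format, of 0 t] show "val c (int m) (int (Suc n)) t \<noteq> 0" by simp
  qed
qed

end


lemma Vpoly:
  fixes j P Q e :: nat
  shows "((2*real j + 2*real P + real e + 1 + (2*real j + 2*real Q + real e + 1))/2 + 2)*((2*real j + 2*real P + real e + 1)*(2*real j + 2*real Q + real e + 1))
     + real j*(((2*real j + 2*real P + real e + 1)*(2*real j + 2*real Q + real e + 1))*(2*real j + 2*real P + real e + 1 + (2*real j + 2*real Q + real e + 1))/2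
        - 2*(2*real j + 2*real P + real e + 1 + (2*real j + 2*real Q + real e + 1)))
     - ((2*real j + 2*real P + real e + 1 + (2*real j + 2*real Q + real e + 1)) + (2*real j + 2*real P + real e + 1)*(2*real j + 2*real Q + real e + 1))*real j*(real j - 1)
     - 2*(real j+1)*((2*real j + 2*real Q + real e + 1) - real j)*(real P*(real Q+1))
     - 2*(real j+1)*((2*real j + 2*real P + real e + 1) - real j)*(real Q*(real P+1))
   = real (3 + 7*e + 5*e^2 + 1*e^3 + 5*Q + 8*Q*e + 3*Q*e^2 + 2*Q^2 + 2*Q^2*e + 5*P + 8*P*e + 3*P*e^2 + 4*P*Q + 4*P*Q*e + 2*P^2 + 2*P^2*e + 14*j + 23*j*e + 10*j*e^2 + 1*j*e^3 + 19*j*Q + 18*j*Q*e + 3*j*Q*e^2 + 6*j*Q^2 + 2*j*Q^2*e + 19*j*P + 18*j*P*e + 3*j*P*e^2 + 12*j*P*Q + 4*j*P*Q*e + 6*j*P^2 + 2*j*P^2*e + 23*j^2 + 24*j^2*e + 5*j^2*e^2 + 22*j^2*Q + 10*j^2*Q*e + 4*j^2*Q^2 + 22*j^2*P + 10*j^2*P*e + 8*j^2*P*Q + 4*j^2*P^2 + 16*j^3 + 8*j^3*e + 8*j^3*Q + 8*j^3*P + 4*j^4)"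
  by (simp add: algebra_simps power2_eq_square power3_eq_cube power4_eq_xxxx add_divide_distrib)


definition Ahat :: "real \<Rightarrow> real \<Rightarrow> real \<Rightarrow> real" where
  "Ahat a b k = ((a + b)/2 + 2)*(a*b) + k*((a*b)*(a + b)/2 - 2*(a + b)) - ((a + b) + a*b)*k*(k - 1)"

definition CFa :: "real \<Rightarrow> real \<Rightarrow> real \<Rightarrow> prm" where
  "CFa a b k = (Ahat a b k / (a*b), 2*(k+1)*(b - k)/(a*b), 2*(k+1)*(a - k)/(a*b), 1 + 4*(k+1)/(a*b),
     (2*(k+1) - b)/(a*b), (2*(k+1) - a)/(a*b), 1/(a*b))"

lemma CFa_step:
  assumes a: "a \<noteq> 0" and b: "b \<noteq> 0"
  shows "(let (A, B1, B2, x1, x2, x3, x4) = CFa a b k in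
     (A - 2 * B1 - 2 * B2 + ((a + b)/2 - 2*k) * x1, B1 - 2 * x2, B2 - 2 * x3,
      x1 + 4 * x4, x2 + 2 * x4, x3 + 2 * x4, x4)) = CFa a b (k + 1)"
proof -
  have p: "a * b \<noteq> 0" using a b by simp
  have e1: "Ahat a b k / (a*b) - 2 * (2*(k+1)*(b - k)/(a*b)) - 2 * (2*(k+1)*(a - k)/(a*b))
      + ((a + b)/2 - 2*k) * (1 + 4*(k+1)/(a*b)) = Ahat a b (k + 1) / (a*b)"
    using p unfolding Ahat_def by (simp add: field_simps)
  have e2: "2*(k+1)*(b - k)/(a*b) - 2 * ((2*(k+1) - b)/(a*b)) = 2*(k + 1 + 1)*(b - (k + 1))/(a*b)"
    using p by (simp add: field_simps)
  have e3: "2*(k+1)*(a - k)/(a*b) - 2 * ((2*(k+1) - a)/(a*b)) = 2*(k + 1 + 1)*(a - (k + 1))/(a*b)"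
    using p by (simp add: field_simps)
  have e4: "1 + 4*(k+1)/(a*b) + 4 * (1/(a*b)) = 1 + 4*(k + 1 + 1)/(a*b)"
    using p by (simp add: field_simps)
  have e5: "(2*(k+1) - b)/(a*b) + 2 * (1/(a*b)) = (2*(k + 1 + 1) - b)/(a*b)"
    using p by (simp add: field_simps)
  have e6: "(2*(k+1) - a)/(a*b) + 2 * (1/(a*b)) = (2*(k + 1 + 1) - a)/(a*b)"
    using p by (simp add: field_simps)
  show ?thesis unfolding CFa_def Let_def prod.case e1 e2 e3 e4 e5 e6 ..
qed


context mk
begin

definition CF :: "int \<Rightarrow> int \<Rightarrow> nat \<Rightarrow> prm" where
  "CF m n j = CFa (cc m) (cc n) (real j)"

lemma CF_nxt:
  assumes a: "cc m \<noteq> 0" and b: "cc n \<noteq> 0"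
  shows "nxt (m - int j) (n - int j) (CF m n j) = CF m n (Suc j)"
proof -
  obtain A B1 B2 x1 x2 x3 x4 where c: "CFa (cc m) (cc n) (real j) = (A, B1, B2, x1, x2, x3, x4)"
    by (cases "CFa (cc m) (cc n) (real j)") auto
  have X: "of_int (m - int j) + of_int (n - int j) - 2 + real d = (cc m + cc n)/2 - 2 * real j"
    by (simp add: cc_def field_simps)
  have "CF m n (Suc j) = CFa (cc m) (cc n) (real j + 1)" by (simp add: CF_def add.commute)
  also have "\<dots> = (A - 2 * B1 - 2 * B2 + ((cc m + cc n)/2 - 2 * real j) * x1, B1 - 2 * x2, B2 - 2 * x3,
      x1 + 4 * x4, x2 + 2 * x4, x3 + 2 * x4, x4)"
    using CFa_step[OF a b, of "real j"] c by simp
  also have "\<dots> = nxt (m - int j) (n - int j) (CF m n j)"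
    unfolding CF_def c nxt.simps X ..
  finally show ?thesis by simp
qed

lemma itr_CF:
  assumes a: "cc m \<noteq> 0" and b: "cc n \<noteq> 0"
  shows "itr (CF m n j) (m - int j) (n - int j) k = CF m n (j + k)"
proof (induction k arbitrary: j)
  case 0
  then show ?case by simp
next
  case (Suc k)
  have e1: "m - int j - 1 = m - int (Suc j)" "n - int j - 1 = n - int (Suc j)" by simp_all
  have "itr (CF m n j) (m - int j) (n - int j) (Suc k) = itr (CF m n (Suc j)) (m - int (Suc j)) (n - int (Suc j)) k"
    by (simp only: itr.simps CF_nxt[OF a b] e1)
  also have "\<dots> = CF m n (Suc j + k)" by (rule Suc.IH)
  finally show ?case by simp
qed

lemma c0_CF:
  assumes a: "cc m \<noteq> 0" and b: "cc n \<noteq> 0"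
  shows "c0 m n = CF m n 0"
proof -
  have 1: "Ahat (cc m) (cc n) 0 / (cc m * cc n) = of_int m + of_int n + real d"
  proof -
    have "Ahat (cc m) (cc n) 0 / (cc m * cc n) = (cc m + cc n)/2 + 2"
      using a b by (simp add: Ahat_def)
    also have "\<dots> = of_int m + of_int n + real d" by (simp add: cc_def field_simps)
    finally show ?thesis .
  qed
  have 2: "2 * (0 + 1) * (cc n - 0) / (cc m * cc n) = 2 / cc m" using a b by (simp add: field_simps)
  have 3: "2 * (0 + 1) * (cc m - 0) / (cc m * cc n) = 2 / cc n" using a b by (simp add: field_simps)
  have 4: "(2 * (0 + 1) - cc n) / (cc m * cc n) = - 1 / cc m + 2 / (cc m * cc n)" using a b by (simp add: field_simps)
  have 5: "(2 * (0 + 1) - cc m) / (cc m * cc n) = - 1 / cc n + 2 / (cc m * cc n)" using a b by (simp add: field_simps)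
  have 6: "1 + 4 * (0 + 1) / (cc m * cc n) = 1 + 4 / (cc m * cc n)" by simp
  show ?thesis unfolding c0_def CF_def CFa_def of_nat_0 1 2 3 4 5 6 ..
qed

end

context mk
begin

lemma val_pos:
  assumes d3: "d \<ge> 3" and t: "t \<le> Q"
  shows "0 < val (CF (int (j + P)) (int (j + Q)) j) (int P) (int Q) t"
proof -
  obtain e where de: "d = e + 3" using d3 by (metis add.commute le_iff_add)
  obtain u where Qu: "Q = t + u" using t by (metis le_iff_add)
  define a where "a = 2*real j + 2*real P + real e + 1"
  define b where "b = 2*real j + 2*real Q + real e + 1"
  have ha: "cc (int (j + P)) = a" unfolding cc_def by (simp add: de a_def)
  have hb: "cc (int (j + Q)) = b" unfolding cc_def by (simp add: de b_def)
  have apos: "a > 0" and bpos: "b > 0" by (simp_all add: a_def b_def add_pos_nonneg)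
  define r where "r = rt (int P) (int Q) t"
  define N where "N = Ahat a b (real j) + 2*(real j+1)*(a - real j) * (real P - real Q)
     - (2*(real j+1)*(b - real j) + 2*(real j+1)*(a - real j)) * r"
  have v: "val (CF (int (j + P)) (int (j + Q)) j) (int P) (int Q) t = N / (a * b)"
    unfolding CF_def ha hb CFa_def val.simps N_def r_def
    by (simp add: add_divide_distrib diff_divide_distrib) (simp add: add_divide_distrib[symmetric])
  have V: "Ahat a b (real j) - 2*(real j+1)*(b - real j)*(real P*(real Q+1)) - 2*(real j+1)*(a - real j)*(real Q*(real P+1))
      = real (3 + 7*e + 5*e^2 + 1*e^3 + 5*Q + 8*Q*e + 3*Q*e^2 + 2*Q^2 + 2*Q^2*e + 5*P + 8*P*e + 3*P*e^2 + 4*P*Q + 4*P*Q*e + 2*P^2 + 2*P^2*e + 14*j + 23*j*e + 10*j*e^2 + 1*j*e^3 + 19*j*Q + 18*j*Q*e + 3*j*Q*e^2 + 6*j*Q^2 + 2*j*Q^2*e + 19*j*P + 18*j*P*e + 3*j*P*e^2 + 12*j*P*Q + 4*j*P*Q*e + 6*j*P^2 + 2*j*P^2*e + 23*j^2 + 24*j^2*e + 5*j^2*e^2 + 22*j^2*Q + 10*j^2*Q*e + 4*j^2*Q^2 + 22*j^2*P + 10*j^2*P*e + 8*j^2*P*Q + 4*j^2*P^2 + 16*j^3 + 8*j^3*e + 8*j^3*Q + 8*j^3*P + 4*j^4)"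
    unfolding Ahat_def a_def b_def by (rule Vpoly)
  have r1: "real P * (real Q + 1) - r = real u * (real P + real t + 1)"
    unfolding r_def rt_def Qu by (simp add: algebra_simps)
  have r2: "real Q * (real P + 1) - (r - (real P - real Q)) = real u * (real P + real t + 1)"
    unfolding r_def rt_def Qu by (simp add: algebra_simps)
  have NV: "N = real (3 + 7*e + 5*e^2 + 1*e^3 + 5*Q + 8*Q*e + 3*Q*e^2 + 2*Q^2 + 2*Q^2*e + 5*P + 8*P*e + 3*P*e^2 + 4*P*Q + 4*P*Q*e + 2*P^2 + 2*P^2*e + 14*j + 23*j*e + 10*j*e^2 + 1*j*e^3 + 19*j*Q + 18*j*Q*e + 3*j*Q*e^2 + 6*j*Q^2 + 2*j*Q^2*e + 19*j*P + 18*j*P*e + 3*j*P*e^2 + 12*j*P*Q + 4*j*P*Q*e + 6*j*P^2 + 2*j*P^2*e + 23*j^2 + 24*j^2*e + 5*j^2*e^2 + 22*j^2*Q + 10*j^2*Q*e + 4*j^2*Q^2 + 22*j^2*P + 10*j^2*P*e + 8*j^2*P*Q + 4*j^2*P^2 + 16*j^3 + 8*j^3*e + 8*j^3*Q + 8*j^3*P + 4*j^4)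
      + 2*(real j+1)*(b - real j) * (real u * (real P + real t + 1))
      + 2*(real j+1)*(a - real j) * (real u * (real P + real t + 1))"
    unfolding V[symmetric] r1[symmetric] r2[symmetric] N_def by (simp add: algebra_simps)
  have bj: "b - real j \<ge> 0" and aj: "a - real j \<ge> 0" by (simp_all add: a_def b_def)
  have pn: "(0::nat) < 3 + 7*e + 5*e^2 + 1*e^3 + 5*Q + 8*Q*e + 3*Q*e^2 + 2*Q^2 + 2*Q^2*e + 5*P + 8*P*e + 3*P*e^2 + 4*P*Q + 4*P*Q*e + 2*P^2 + 2*P^2*e + 14*j + 23*j*e + 10*j*e^2 + 1*j*e^3 + 19*j*Q + 18*j*Q*e + 3*j*Q*e^2 + 6*j*Q^2 + 2*j*Q^2*e + 19*j*P + 18*j*P*e + 3*j*P*e^2 + 12*j*P*Q + 4*j*P*Q*e + 6*j*P^2 + 2*j*P^2*e + 23*j^2 + 24*j^2*e + 5*j^2*e^2 + 22*j^2*Q + 10*j^2*Q*e + 4*j^2*Q^2 + 22*j^2*P + 10*j^2*P*e + 8*j^2*P*Q + 4*j^2*P^2 + 16*j^3 + 8*j^3*e + 8*j^3*Q + 8*j^3*P + 4*j^4" by simp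
  have pr: "0 < real (3 + 7*e + 5*e^2 + 1*e^3 + 5*Q + 8*Q*e + 3*Q*e^2 + 2*Q^2 + 2*Q^2*e + 5*P + 8*P*e + 3*P*e^2 + 4*P*Q + 4*P*Q*e + 2*P^2 + 2*P^2*e + 14*j + 23*j*e + 10*j*e^2 + 1*j*e^3 + 19*j*Q + 18*j*Q*e + 3*j*Q*e^2 + 6*j*Q^2 + 2*j*Q^2*e + 19*j*P + 18*j*P*e + 3*j*P*e^2 + 12*j*P*Q + 4*j*P*Q*e + 6*j*P^2 + 2*j*P^2*e + 23*j^2 + 24*j^2*e + 5*j^2*e^2 + 22*j^2*Q + 10*j^2*Q*e + 4*j^2*Q^2 + 22*j^2*P + 10*j^2*P*e + 8*j^2*P*Q + 4*j^2*P^2 + 16*j^3 + 8*j^3*e + 8*j^3*Q + 8*j^3*P + 4*j^4)" by (simp only: of_nat_0_less_iff pn)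
  have "N > 0" unfolding NV
    by (intro add_pos_nonneg mult_nonneg_nonneg pr) (use aj bj in auto)
  then show ?thesis unfolding v using apos bpos by simp
qed

lemma good_c0:
  assumes d3: "d \<ge> 3"
  shows "goodc (c0 (int m) (int n)) m n"
  unfolding goodc_def
proof (intro allI impI)
  fix k t assume km: "k \<le> m" and kn: "k \<le> n" and t: "t \<le> n - k"
  have cm: "cc (int m) \<noteq> 0" and cn: "cc (int n) \<noteq> 0" using d3 by (simp_all add: cc_def)
  obtain P where P: "m = k + P" using km by (metis le_iff_add)
  obtain Q where Q: "n = k + Q" using kn by (metis le_iff_add)
  have "itr (c0 (int m) (int n)) (int m) (int n) k = CF (int m) (int n) k"
    using itr_CF[OF cm cn, of 0 k] by (simp add: c0_CF[OF cm cn])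
  moreover have "0 < val (CF (int (k + P)) (int (k + Q)) k) (int P) (int Q) t"
    by (rule val_pos[OF d3]) (use t Q in simp)
  ultimately show "val (itr (c0 (int m) (int n)) (int m) (int n) k) (int m - int k) (int n - int k) t \<noteq> 0"
    using P Q by simp
qed

end


context vector_space
begin

lemma inj_surj_sub:
  assumes sV: "subspace V" and fW: "finite W" and VW: "V \<subseteq> span W"
    and lL: "Vector_Spaces.linear scale scale L" and LV: "L ` V \<subseteq> V"
    and inj0: "\<And>x. x \<in> V \<Longrightarrow> L x = 0 \<Longrightarrow> x = 0"
  shows "V \<subseteq> L ` V"
proof -
  interpret Ln: Vector_Spaces.linear scale scale L by (rule lL)
  obtain B where B: "B \<subseteq> V" "independent B" "V \<subseteq> span B" "card B = dim V"
    using basis_exists by blast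
  have spB: "span B \<subseteq> V" using span_minimal[OF B(1) sV] .
  have spBeq: "span B = V" using spB B(3) by auto
  have fB: "finite B" using independent_span_bound[OF fW B(2)] B(1) VW by auto
  have injV: "inj_on L V"
  proof (rule inj_onI)
    fix x y assume x: "x \<in> V" and y: "y \<in> V" and e: "L x = L y"
    have "x - y \<in> V" using subspace_diff[OF sV x y] .
    moreover have "L (x - y) = 0" using e by (simp add: Ln.diff)
    ultimately have "x - y = 0" by (rule inj0)
    then show "x = y" by simp
  qed
  have injB: "inj_on L (span B)" using injV spBeq by simp
  have indLB: "independent (L ` B)" by (rule Ln.independent_injective_image[OF B(2) injB])
  have cardLB: "card (L ` B) = card B"
    using card_image[OF inj_on_subset[OF injV B(1)]] .
  have "V \<subseteq> span (L ` B)"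
  proof
    fix a assume aV: "a \<in> V"
    show "a \<in> span (L ` B)"
    proof (rule ccontr)
      assume na: "a \<notin> span (L ` B)"
      have ind: "independent (insert a (L ` B))" by (rule independent_insertI[OF na indLB])
      have sub: "insert a (L ` B) \<subseteq> span B" using aV LV B(1) B(3) by auto
      have "card (insert a (L ` B)) \<le> card B"
        using independent_span_bound[OF fB ind sub] by simp
      moreover have "a \<notin> L ` B" using na span_base by blast
      then have "card (insert a (L ` B)) = card B + 1"
        using cardLB fB by simp
      ultimately show False by simp
    qed
  qed
  also have "span (L ` B) = L ` span B" by (rule Ln.span_image)
  also have "\<dots> = L ` V" using spBeq by simp
  finally show ?thesis .
qed

end

interpretation cp: vector_space sm
  by unfold_locales (simp_all add: sm_def fun_eq_iff algebra_simps)

lemma lin_linear: "lin L \<Longrightarrow> Vector_Spaces.linear sm sm L"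
  unfolding Vector_Spaces.linear_iff lin_def
  using cp.vector_space_axioms by auto

lemma if10_left: "(if P then 1 else 0) * (b::real) = (if P then b else 0)" by simp
lemma if10_right: "(b::real) * (if P then 1 else 0) = (if P then b else 0)" by simp

lemma sum_fn_apply: "(\<Sum>i\<in>I. F i) x = (\<Sum>i\<in>I. F i x)"
  for F :: "'i \<Rightarrow> nat \<Rightarrow> real"
  by (induction I rule: infinite_finite_induct) auto

definition rsc :: "real \<Rightarrow> (nat \<Rightarrow> real) \<Rightarrow> (nat \<Rightarrow> real)" where
  "rsc c v = (\<lambda>i. c * v i)"

interpretation rv: vector_space rsc
  by unfold_locales (simp_all add: rsc_def fun_eq_iff algebra_simps)

lemma exists_inverse:
  fixes eta :: "nat \<Rightarrow> nat \<Rightarrow> real"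
  assumes sn: "sym_nondeg d eta"
  shows "\<exists>g. (\<forall>mu nu. mu < d \<longrightarrow> nu < d \<longrightarrow> g mu nu = g nu mu) \<and>
     (\<forall>mu rho. mu < d \<longrightarrow> rho < d \<longrightarrow> (\<Sum>nu<d. eta mu nu * g nu rho) = (if mu = rho then 1 else 0))"
proof -
  have esym: "\<And>mu nu. mu < d \<Longrightarrow> nu < d \<Longrightarrow> eta mu nu = eta nu mu" using sn by (simp add: sym_nondeg_def)
  have nd: "\<And>v. (\<forall>nu<d. (\<Sum>mu<d. eta mu nu * v mu) = 0) \<Longrightarrow> (\<forall>mu<d. v mu = 0)"
    using sn by (simp add: sym_nondeg_def)
  define U where "U = {v :: nat \<Rightarrow> real. \<forall>i. d \<le> i \<longrightarrow> v i = 0}"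
  define ev where "ev = (\<lambda>r::nat. (\<lambda>i. if i = r then 1 else 0 :: real))"
  define L where "L = (\<lambda>v::nat \<Rightarrow> real. \<lambda>nu. if nu < d then (\<Sum>mu<d. eta mu nu * v mu) else 0)"
  have sU: "rv.subspace U" unfolding rv.subspace_def U_def by (auto simp: rsc_def)
  have UW: "U \<subseteq> rv.span (ev ` {..<d})"
  proof
    fix v assume v: "v \<in> U"
    have "v = (\<Sum>r<d. rsc (v r) (ev r))"
    proof
      fix x
      have m: "\<And>(a::real) P. a * (if P then 1 else 0) = (if P then a else 0)" by simp
      have "(\<Sum>r<d. rsc (v r) (ev r)) x = (\<Sum>r<d. if x = r then v r else 0)"
        unfolding sum_fn_apply rsc_def ev_def by (simp only: m)
      also have "\<dots> = v x" using v by (auto simp: U_def not_less)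
      finally show "v x = (\<Sum>r<d. rsc (v r) (ev r)) x" by simp
    qed
    also have "\<dots> \<in> rv.span (ev ` {..<d})"
      by (intro rv.span_sum rv.span_scale rv.span_base) auto
    finally show "v \<in> rv.span (ev ` {..<d})" .
  qed
  have lL: "Vector_Spaces.linear rsc rsc L"
    unfolding Vector_Spaces.linear_iff using rv.vector_space_axioms
    by (auto simp: L_def rsc_def fun_eq_iff sum.distrib sum_distrib_left algebra_simps)
  have LU: "L ` U \<subseteq> U" by (auto simp: L_def U_def)
  have inj0: "\<And>v. v \<in> U \<Longrightarrow> L v = 0 \<Longrightarrow> v = 0"
  proof -
    fix v assume v: "v \<in> U" and Lv: "L v = 0"
    have "\<forall>nu<d. (\<Sum>mu<d. eta mu nu * v mu) = 0"
    proof (intro allI impI)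
      fix nu assume "nu < d"
      then show "(\<Sum>mu<d. eta mu nu * v mu) = 0" using fun_cong[OF Lv, of nu] by (simp add: L_def)
    qed
    then have "\<forall>mu<d. v mu = 0" by (rule nd)
    then show "v = 0" using v by (auto simp: U_def fun_eq_iff) (metis not_le)
  qed
  have sur: "U \<subseteq> L ` U" by (rule rv.inj_surj_sub[OF sU finite_imageI[OF finite_lessThan] UW lL LU inj0])
  have "\<forall>r. \<exists>v. r < d \<longrightarrow> v \<in> U \<and> L v = ev r"
  proof
    fix r
    show "\<exists>v. r < d \<longrightarrow> v \<in> U \<and> L v = ev r"
    proof (cases "r < d")
      case True
      then have "ev r \<in> U" by (auto simp: U_def ev_def)
      then have "ev r \<in> L ` U" by (rule subsetD[OF sur])
      then obtain v where "v \<in> U" "ev r = L v" by (rule imageE)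
      then show ?thesis by (intro exI[of _ v]) simp
    qed simp
  qed
  then obtain V where V: "\<And>r. r < d \<Longrightarrow> V r \<in> U \<and> L (V r) = ev r" by metis
  define g0 where "g0 = (\<lambda>mu r. V r mu)"
  have h1: "\<And>nu r. nu < d \<Longrightarrow> r < d \<Longrightarrow> (\<Sum>mu<d. eta nu mu * g0 mu r) = (if nu = r then 1 else 0)"
  proof -
    fix nu r assume a: "nu < d" "r < d"
    have "(\<Sum>mu<d. eta nu mu * g0 mu r) = (\<Sum>mu<d. eta mu nu * V r mu)"
      by (rule sum.cong) (auto simp: g0_def esym a)
    also have "\<dots> = L (V r) nu" using a by (simp add: L_def)
    also have "\<dots> = (if nu = r then 1 else 0)" using V[OF a(2)] by (simp add: ev_def)
    finally show "(\<Sum>mu<d. eta nu mu * g0 mu r) = (if nu = r then 1 else 0)" .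
  qed
  have h2: "\<And>s r. s < d \<Longrightarrow> r < d \<Longrightarrow> g0 s r = g0 r s"
  proof -
    fix s r assume a: "s < d" "r < d"
    have "(\<Sum>nu<d. \<Sum>mu<d. g0 mu s * eta mu nu * g0 nu r) = (\<Sum>nu<d. (if nu = s then 1 else 0) * g0 nu r)"
    proof (rule sum.cong[OF refl])
      fix nu assume nu: "nu \<in> {..<d}"
      have nu': "nu < d" using nu by simp
      have "(\<Sum>mu<d. g0 mu s * eta mu nu * g0 nu r) = (\<Sum>mu<d. eta nu mu * g0 mu s * g0 nu r)"
        by (rule sum.cong[OF refl]) (simp add: esym nu')
      also have "\<dots> = (\<Sum>mu<d. eta nu mu * g0 mu s) * g0 nu r" by (simp add: sum_distrib_right)
      finally have "(\<Sum>mu<d. g0 mu s * eta mu nu * g0 nu r) = (\<Sum>mu<d. eta nu mu * g0 mu s) * g0 nu r" .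
      then show "(\<Sum>mu<d. g0 mu s * eta mu nu * g0 nu r) = (if nu = s then 1 else 0) * g0 nu r"
        using h1[of nu s] nu a by simp
    qed
    also have "\<dots> = g0 s r" using a by (simp only: if10_left sum.delta' finite_lessThan) simp
    finally have 1: "(\<Sum>nu<d. \<Sum>mu<d. g0 mu s * eta mu nu * g0 nu r) = g0 s r" .
    have "(\<Sum>nu<d. \<Sum>mu<d. g0 mu s * eta mu nu * g0 nu r) = (\<Sum>mu<d. \<Sum>nu<d. g0 mu s * eta mu nu * g0 nu r)"
      by (rule sum.swap)
    also have "\<dots> = (\<Sum>mu<d. g0 mu s * (if mu = r then 1 else 0))"
    proof (rule sum.cong[OF refl])
      fix mu assume mu: "mu \<in> {..<d}"
      have "(\<Sum>nu<d. g0 mu s * eta mu nu * g0 nu r) = g0 mu s * (\<Sum>nu<d. eta mu nu * g0 nu r)"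
        by (simp add: sum_distrib_left mult.assoc)
      then show "(\<Sum>nu<d. g0 mu s * eta mu nu * g0 nu r) = g0 mu s * (if mu = r then 1 else 0)"
        using h1[of mu r] mu a by simp
    qed
    also have "\<dots> = g0 r s" using a by (simp only: if10_right sum.delta finite_lessThan) simp
    finally have 2: "(\<Sum>nu<d. \<Sum>mu<d. g0 mu s * eta mu nu * g0 nu r) = g0 r s" .
    show "g0 s r = g0 r s" using 1 2 by simp
  qed
  show ?thesis using h1 h2 by blast
qed


context mk
begin

definition cut :: "(nat \<Rightarrow> nat \<Rightarrow> bool) \<Rightarrow> cpoly \<Rightarrow> cpoly" where
  "cut P p = (\<lambda>al be. if P (deg al) (deg be) then p al be else 0)"

lemma deg_upd_Suc: "mu < d \<Longrightarrow> deg (al(mu := Suc (al mu))) = Suc (deg al)"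
  using deg_upd[of mu al "Suc (al mu)"] by simp

lemma dy_cut: "mu < d \<Longrightarrow> dy mu (cut P p) = cut (\<lambda>x y. P (Suc x) y) (dy mu p)"
  by (auto simp: cut_def dy_def fun_eq_iff deg_upd_Suc)
lemma da_cut: "mu < d \<Longrightarrow> da mu (cut P p) = cut (\<lambda>x y. P x (Suc y)) (da mu p)"
  by (auto simp: cut_def da_def fun_eq_iff deg_upd_Suc)
lemma cut_sm: "sm c (cut P p) = cut P (sm c p)" by (simp add: cut_def fun_eq_iff)
lemma cut_sum: "(\<Sum>i\<in>I. cut P (F i)) = cut P (\<Sum>i\<in>I. F i)"
  by (simp add: cut_def fun_eq_iff sum_cpoly_apply)
lemma cut_zero[simp]: "cut P 0 = 0" by (simp add: cut_def fun_eq_iff)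
lemma cut_add: "cut P p + cut P q = cut P (p + q)" by (simp add: cut_def fun_eq_iff)

lemma Dyu_cut: "Dyu mu (cut P p) = cut (\<lambda>x y. P (Suc x) y) (Dyu mu p)"
  unfolding Dyu_def by (simp add: dy_cut cut_sm cut_sum)
lemma Dau_cut: "Dau mu (cut P p) = cut (\<lambda>x y. P x (Suc y)) (Dau mu p)"
  unfolding Dau_def by (simp add: da_cut cut_sm cut_sum)
lemma Bx_cut: "Bx (cut P p) = cut (\<lambda>x y. P (Suc (Suc x)) y) (Bx p)"
  unfolding Bx_def by (simp add: dy_cut Dyu_cut cut_sum)
lemma Tt_cut: "Tt (cut P p) = cut (\<lambda>x y. P x (Suc (Suc y))) (Tt p)"
  unfolding Tt_def by (simp add: da_cut Dau_cut cut_sum)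
lemma Ss_cut: "Ss (cut P p) = cut (\<lambda>x y. P (Suc x) (Suc y)) (Ss p)"
  unfolding Ss_def by (simp add: da_cut Dyu_cut cut_sum)

lemma hom_cut: "hom (int m) (int n) (cut (\<lambda>x y. x = m \<and> y = n) p)"
  by (auto simp: hom_def cut_def split: if_splits)
lemma vars_cut: "vars p \<Longrightarrow> vars (cut P p)"
  by (auto simp: vars_def cut_def split: if_splits)

definition FF :: "nat \<Rightarrow> (nat \<Rightarrow> nat) set" where
  "FF K = {f. \<forall>x. (x \<in> {..<d} \<longrightarrow> f x \<in> {..K}) \<and> (x \<notin> {..<d} \<longrightarrow> f x = 0)}"

lemma finite_FF: "finite (FF K)"
  unfolding FF_def by (rule finite_set_of_finite_funs) auto

lemma le_deg: "i < d \<Longrightarrow> al i \<le> deg al"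
  unfolding deg_def by (rule member_le_sum) auto

lemma supp_FF:
  assumes v: "vars p" and nz: "p al be \<noteq> 0" and K: "deg al \<le> K" "deg be \<le> K"
  shows "al \<in> FF K" "be \<in> FF K"
proof -
  have z: "\<And>i. d \<le> i \<Longrightarrow> al i = 0 \<and> be i = 0" using v nz unfolding vars_def by blast
  show "al \<in> FF K" unfolding FF_def using z le_deg[of _ al] K(1) by (auto simp: not_less intro: order_trans)
  show "be \<in> FF K" unfolding FF_def using z le_deg[of _ be] K(2) by (auto simp: not_less intro: order_trans)
qed

lemma finsupp:
  assumes v: "vars p" and b: "\<And>al be. p al be \<noteq> 0 \<Longrightarrow> deg al \<le> K \<and> deg be \<le> K"
  shows "finite {(al, be). p al be \<noteq> 0}"
proof (rule finite_subset[of _ "FF K \<times> FF K"])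
  show "{(al, be). p al be \<noteq> 0} \<subseteq> FF K \<times> FF K"
    using supp_FF[OF v] b by blast
  show "finite (FF K \<times> FF K)" using finite_FF by simp
qed

lemma bounded_deg:
  assumes f: "finite {(al, be). p al be \<noteq> 0}"
  shows "\<exists>K. \<forall>al be. p al be \<noteq> 0 \<longrightarrow> deg al \<le> K \<and> deg be \<le> K"
proof -
  define S where "S = {(al, be). p al be \<noteq> 0}"
  define K where "K = Max (insert 0 ((\<lambda>(al, be). max (deg al) (deg be)) ` S))"
  have "\<forall>al be. p al be \<noteq> 0 \<longrightarrow> deg al \<le> K \<and> deg be \<le> K"
  proof (intro allI impI)
    fix al be assume "p al be \<noteq> 0"
    then have "(al, be) \<in> S" by (simp add: S_def)
    then have "max (deg al) (deg be) \<le> K"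
      unfolding K_def using f S_def by (intro Max_ge) auto
    then show "deg al \<le> K \<and> deg be \<le> K" by simp
  qed
  then show ?thesis by blast
qed

lemma decomp:
  assumes b: "\<And>al be. p al be \<noteq> 0 \<Longrightarrow> deg al \<le> K \<and> deg be \<le> K"
  shows "p = (\<Sum>m\<le>K. \<Sum>n\<le>K. cut (\<lambda>x y. x = m \<and> y = n) p)"
proof (rule ext, rule ext)
  fix al be
  have "(\<Sum>m\<le>K. \<Sum>n\<le>K. cut (\<lambda>x y. x = m \<and> y = n) p) al be
      = (\<Sum>m\<le>K. \<Sum>n\<le>K. if deg al = m \<and> deg be = n then p al be else 0)"
    by (simp add: sum_cpoly_apply cut_def)
  also have "\<dots> = (if deg al \<le> K \<and> deg be \<le> K then p al be else 0)"
  proof -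
    have inner: "\<And>m. (\<Sum>n\<le>K. if deg al = m \<and> deg be = n then p al be else 0)
        = (if deg al = m \<and> deg be \<le> K then p al be else 0)"
    proof -
      fix m
      show "(\<Sum>n\<le>K. if deg al = m \<and> deg be = n then p al be else 0)
        = (if deg al = m \<and> deg be \<le> K then p al be else 0)"
      proof (cases "deg al = m")
        case True
        then show ?thesis using sum.delta[of "{..K}" "deg be" "\<lambda>_. p al be"] by simp
      qed simp
    qed
    have "(\<Sum>m\<le>K. \<Sum>n\<le>K. if deg al = m \<and> deg be = n then p al be else 0)
        = (\<Sum>m\<le>K. if deg al = m \<and> deg be \<le> K then p al be else 0)"
      by (simp only: inner)
    also have "\<dots> = (if deg al \<le> K \<and> deg be \<le> K then p al be else 0)"
    proof (cases "deg be \<le> K")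
      case True
      then show ?thesis using sum.delta[of "{..K}" "deg al" "\<lambda>_. p al be"] by simp
    qed simp
    finally show ?thesis .
  qed
  also have "\<dots> = p al be" using b[of al be] by auto
  finally show "p al be = (\<Sum>m\<le>K. \<Sum>n\<le>K. cut (\<lambda>x y. x = m \<and> y = n) p) al be" by simp
qed


lemma lin_Psi: "lin (Psi c)"
proof -
  obtain A B1 B2 x1 x2 x3 x4 where c: "c = (A, B1, B2, x1, x2, x3, x4)" by (cases c) auto
  show ?thesis unfolding lin_def c
    by (simp add: Xop_def fun_eq_iff algebra_simps)
qed

definition monom :: "(nat \<Rightarrow> nat) \<Rightarrow> (nat \<Rightarrow> nat) \<Rightarrow> cpoly" where
  "monom al be = (\<lambda>x y. if x = al \<and> y = be then 1 else 0)"

lemma span_mono: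
  assumes v: "vars p" and h: "hom (int m) (int n) p"
  shows "p \<in> cp.span ((\<lambda>(al, be). monom al be) ` (FF (max m n) \<times> FF (max m n)))"
proof -
  define S where "S = FF (max m n) \<times> FF (max m n)"
  have fS: "finite S" unfolding S_def using finite_FF by simp
  have b: "\<And>al be. p al be \<noteq> 0 \<Longrightarrow> deg al \<le> max m n \<and> deg be \<le> max m n"
    using h unfolding hom_def by fastforce
  have pS: "\<And>al be. p al be \<noteq> 0 \<Longrightarrow> (al, be) \<in> S"
    unfolding S_def using supp_FF[OF v] b by blast
  have eq: "p = (\<Sum>z\<in>S. sm (p (fst z) (snd z)) (monom (fst z) (snd z)))"
  proof (rule ext, rule ext)
    fix al be
    have "(\<Sum>z\<in>S. sm (p (fst z) (snd z)) (monom (fst z) (snd z))) al be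
        = (\<Sum>z\<in>S. if z = (al, be) then p al be else 0)"
      by (auto simp: sum_cpoly_apply monom_def intro!: sum.cong)
    also have "\<dots> = (if (al, be) \<in> S then p al be else 0)" using fS by simp
    also have "\<dots> = p al be" using pS[of al be] by auto
    finally show "p al be = (\<Sum>z\<in>S. sm (p (fst z) (snd z)) (monom (fst z) (snd z))) al be" by simp
  qed
  have "(\<Sum>z\<in>S. sm (p (fst z) (snd z)) (monom (fst z) (snd z))) \<in> cp.span ((\<lambda>(al, be). monom al be) ` S)"
    by (intro cp.span_sum cp.span_scale cp.span_base) (auto intro!: imageI)
  then show ?thesis using eq S_def by simp
qed

lemma surj_hom:
  assumes d3: "d \<ge> 3" and v: "vars f" and h: "hom (int m) (int n) f" and b: "Bx f = 0" and t: "Tt f = 0"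
  shows "\<exists>g. vars g \<and> hom (int m + 1) (int n + 1) g \<and> Bx g = 0 \<and> Tt g = 0 \<and> Ss g = f"
proof -
  define V where "V = {p. vars p \<and> hom (int m) (int n) p \<and> Bx p = 0 \<and> Tt p = 0}"
  have cm: "cc (int m) \<noteq> 0" and cn: "cc (int n) \<noteq> 0" using d3 by (simp_all add: cc_def)
  have sV: "cp.subspace V"
    unfolding cp.subspace_def V_def
    by (auto intro: vars_add vars_sm hom_add hom_sm)
  have VW: "V \<subseteq> cp.span ((\<lambda>(al, be). monom al be) ` (FF (max m n) \<times> FF (max m n)))"
    unfolding V_def using span_mono by blast
  have fW: "finite ((\<lambda>(al, be). monom al be) ` (FF (max m n) \<times> FF (max m n)))"
    using finite_FF by simp
  have Phi_in: "\<And>p. p \<in> V \<Longrightarrow> vars (Phi (int m) (int n) p) \<and> hom (int m + 1) (int n + 1) (Phi (int m) (int n) p)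
      \<and> Bx (Phi (int m) (int n) p) = 0 \<and> Tt (Phi (int m) (int n) p) = 0"
  proof -
    fix p assume p: "p \<in> V"
    have hp: "hom (int m) (int n) p" and vp: "vars p" and bp: "Bx p = 0" and tp: "Tt p = 0"
      using p by (auto simp: V_def)
    have h1: "hom (int m + 1) (int n + 1) (YA p)" by (rule hom_YA[OF hp])
    have h2: "hom (int m + 1) (int n + 1) (Y2 (Ff p))" using hom_Y2[OF hom_Ff[OF hp]] by (simp add: add.commute)
    have h3: "hom (int m + 1) (int n + 1) (A2 (Ee p))" using hom_A2[OF hom_Ee[OF hp]] by (simp add: add.commute)
    have h4: "hom (int m + 1) (int n + 1) (Y2 (A2 (Ss p)))" using hom_Y2[OF hom_A2[OF hom_Ss[OF hp]]] by (simp add: add.commute)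
    have "hom (int m + 1) (int n + 1) (Phi (int m) (int n) p)"
      unfolding Phi_def Xop_def by (intro hom_add hom_sm h1 h2 h3 h4)
    moreover have "vars (Phi (int m) (int n) p)"
      unfolding Phi_def Xop_def
      by (intro vars_add vars_sm vars_YA vars_Y2 vars_A2 vars_Ff vars_Ee vars_Ss vp)
    ultimately show "vars (Phi (int m) (int n) p) \<and> hom (int m + 1) (int n + 1) (Phi (int m) (int n) p)
      \<and> Bx (Phi (int m) (int n) p) = 0 \<and> Tt (Phi (int m) (int n) p) = 0"
      using Phi_Bx[OF hp bp tp cm cn] Phi_Tt[OF hp bp tp cm cn] by simp
  qed
  have LV: "Psi (c0 (int m) (int n)) ` V \<subseteq> V"
  proof
    fix q assume "q \<in> Psi (c0 (int m) (int n)) ` V"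
    then obtain p where p: "p \<in> V" and q: "q = Psi (c0 (int m) (int n)) p" by auto
    have hp: "hom (int m) (int n) p" and bp: "Bx p = 0" and tp: "Tt p = 0" using p by (auto simp: V_def)
    have q2: "q = Ss (Phi (int m) (int n) p)" using S_Phi[OF hp bp tp] q by simp
    from Phi_in[OF p] have P: "vars (Phi (int m) (int n) p)" "hom (int m + 1) (int n + 1) (Phi (int m) (int n) p)"
      "Bx (Phi (int m) (int n) p) = 0" "Tt (Phi (int m) (int n) p) = 0" by auto
    have "vars q" using vars_Ss[OF P(1)] q2 by simp
    moreover have "hom (int m) (int n) q" using hom_Ss[OF P(2)] q2 by simp
    moreover have "Bx q = 0" using P(3) q2 by (simp add: Bx_Ss)
    moreover have "Tt q = 0" using P(4) q2 by (simp add: Tt_Ss)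
    ultimately show "q \<in> V" by (simp add: V_def)
  qed
  have inj0: "\<And>p. p \<in> V \<Longrightarrow> Psi (c0 (int m) (int n)) p = 0 \<Longrightarrow> p = 0"
  proof -
    fix p assume p: "p \<in> V" and z: "Psi (c0 (int m) (int n)) p = 0"
    show "p = 0"
      by (rule injective[of m n p "c0 (int m) (int n)"]) (use p z good_c0[OF d3] in \<open>auto simp: V_def\<close>)
  qed
  have "V \<subseteq> Psi (c0 (int m) (int n)) ` V"
    by (rule cp.inj_surj_sub[OF sV fW VW lin_linear[OF lin_Psi] LV inj0])
  moreover have "f \<in> V" using v h b t by (simp add: V_def)
  ultimately obtain p where p: "p \<in> V" and fp: "f = Psi (c0 (int m) (int n)) p" by blast
  have hp: "hom (int m) (int n) p" and bp: "Bx p = 0" and tp: "Tt p = 0" using p by (auto simp: V_def)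
  have "Ss (Phi (int m) (int n) p) = f" using S_Phi[OF hp bp tp] fp by simp
  then show ?thesis using Phi_in[OF p] by blast
qed

end


definition supp :: "cpoly \<Rightarrow> ((nat \<Rightarrow> nat) \<times> (nat \<Rightarrow> nat)) set" where
  "supp p = {(al, be). p al be \<noteq> 0}"

lemma supp_add: "supp (p + q) \<subseteq> supp p \<union> supp q"
  by (auto simp: supp_def)

lemma fin_supp_sum: "(\<And>i. i \<in> I \<Longrightarrow> finite (supp (F i))) \<Longrightarrow> finite (supp (\<Sum>i\<in>I. F i))"
proof (induction I rule: infinite_finite_induct)
  case (infinite A)
  then show ?case by (simp add: supp_def)
next
  case empty
  then show ?case by (simp add: supp_def)
next
  case (insert x J)
  have e: "sum F (insert x J) = F x + sum F J" by (rule sum.insert[OF insert.hyps])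
  have "finite (supp (F x) \<union> supp (sum F J))" using insert by simp
  then show ?case unfolding e using supp_add finite_subset by blast
qed

theorem mainTheorem10:
  fixes d :: nat and eta :: "nat \<Rightarrow> nat \<Rightarrow> real"
  assumes "d \<ge> 3" and "sym_nondeg d eta"
  shows "opS d eta ` harmN d eta = harmN d eta"
proof -
  obtain g where gs: "\<forall>mu nu. mu < d \<longrightarrow> nu < d \<longrightarrow> g mu nu = g nu mu"
    and gi: "\<forall>mu rho. mu < d \<longrightarrow> rho < d \<longrightarrow> (\<Sum>nu<d. eta mu nu * g nu rho) = (if mu = rho then 1 else 0)"
    using exists_inverse[OF assms(2)] by blast
  interpret mk d eta g
    by unfold_locales (use assms(2) gs gi in \<open>auto simp: sym_nondeg_def\<close>)
  have eS: "opS d eta = Ss"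
    by (rule ext) (simp add: opS_def Ss_def Dyu_def fun_eq_iff sum_cpoly_apply)
  have eB: "opBox d eta = Bx"
    by (rule ext) (simp add: opBox_def Bx_def Dyu_def fun_eq_iff sum_cpoly_apply)
  have eT: "opT d eta = Tt"
    by (rule ext) (simp add: opT_def Tt_def Dau_def fun_eq_iff sum_cpoly_apply)
  have z: "(\<lambda>_ _. 0 :: real) = (0::cpoly)" by (simp add: fun_eq_iff)
  have hN: "harmN d eta = {p. finite (supp p) \<and> vars p \<and> Bx p = 0 \<and> Tt p = 0}"
    unfolding harmN_def is_poly_def eB eT z supp_def vars_def by auto
  have supp_bound: "\<And>p K. vars p \<Longrightarrow> (\<And>al be. p al be \<noteq> 0 \<Longrightarrow> deg al \<le> K \<and> deg be \<le> K) \<Longrightarrow> finite (supp p)"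
    unfolding supp_def by (rule finsupp)
  show ?thesis
    unfolding eS hN
  proof
    show "Ss ` {p. finite (supp p) \<and> vars p \<and> Bx p = 0 \<and> Tt p = 0} \<subseteq> {p. finite (supp p) \<and> vars p \<and> Bx p = 0 \<and> Tt p = 0}"
    proof
      fix q assume "q \<in> Ss ` {p. finite (supp p) \<and> vars p \<and> Bx p = 0 \<and> Tt p = 0}"
      then obtain p where p: "finite (supp p)" "vars p" "Bx p = 0" "Tt p = 0" and q: "q = Ss p" by auto
      obtain K where K: "\<forall>al be. p al be \<noteq> 0 \<longrightarrow> deg al \<le> K \<and> deg be \<le> K"
        using bounded_deg p(1) unfolding supp_def by blast
      have pc: "p = cut (\<lambda>x y. x \<le> K \<and> y \<le> K) p"
        using K by (auto simp: cut_def fun_eq_iff)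
      have qc: "q = cut (\<lambda>x y. Suc x \<le> K \<and> Suc y \<le> K) (Ss p)"
        using Ss_cut[of "\<lambda>x y. x \<le> K \<and> y \<le> K" p] pc q by simp
      have "finite (supp q)"
      proof (rule supp_bound)
        show "vars q" using vars_Ss[OF p(2)] q by simp
        fix al be assume "q al be \<noteq> 0"
        then show "deg al \<le> K \<and> deg be \<le> K" using qc by (auto simp: cut_def split: if_splits)
      qed
      moreover have "vars q" using vars_Ss[OF p(2)] q by simp
      moreover have "Bx q = 0" using p(3) q by (simp add: Bx_Ss)
      moreover have "Tt q = 0" using p(4) q by (simp add: Tt_Ss)
      ultimately show "q \<in> {p. finite (supp p) \<and> vars p \<and> Bx p = 0 \<and> Tt p = 0}" by simp
    qed
  next
    show "{p. finite (supp p) \<and> vars p \<and> Bx p = 0 \<and> Tt p = 0} \<subseteq> Ss ` {p. finite (supp p) \<and> vars p \<and> Bx p = 0 \<and> Tt p = 0}"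
    proof
      fix f assume "f \<in> {p. finite (supp p) \<and> vars p \<and> Bx p = 0 \<and> Tt p = 0}"
      then have f: "finite (supp f)" "vars f" "Bx f = 0" "Tt f = 0" by auto
      obtain K where K: "\<forall>al be. f al be \<noteq> 0 \<longrightarrow> deg al \<le> K \<and> deg be \<le> K"
        using bounded_deg f(1) unfolding supp_def by blast
      have fd: "f = (\<Sum>m\<le>K. \<Sum>n\<le>K. cut (\<lambda>x y. x = m \<and> y = n) f)"
        by (rule decomp) (use K in blast)
      have ex: "\<forall>m n. \<exists>G. vars G \<and> hom (int m + 1) (int n + 1) G \<and> Bx G = 0 \<and> Tt G = 0
          \<and> Ss G = cut (\<lambda>x y. x = m \<and> y = n) f"
      proof (intro allI)
        fix m n
        show "\<exists>G. vars G \<and> hom (int m + 1) (int n + 1) G \<and> Bx G = 0 \<and> Tt G = 0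
          \<and> Ss G = cut (\<lambda>x y. x = m \<and> y = n) f"
        proof (rule surj_hom[OF assms(1)])
          show "vars (cut (\<lambda>x y. x = m \<and> y = n) f)" by (rule vars_cut[OF f(2)])
          show "hom (int m) (int n) (cut (\<lambda>x y. x = m \<and> y = n) f)" by (rule hom_cut)
          show "Bx (cut (\<lambda>x y. x = m \<and> y = n) f) = 0" by (simp add: Bx_cut f(3))
          show "Tt (cut (\<lambda>x y. x = m \<and> y = n) f) = 0" by (simp add: Tt_cut f(4))
        qed
      qed
      then obtain G where G: "\<And>m n. vars (G m n) \<and> hom (int m + 1) (int n + 1) (G m n) \<and> Bx (G m n) = 0
          \<and> Tt (G m n) = 0 \<and> Ss (G m n) = cut (\<lambda>x y. x = m \<and> y = n) f"
        by metis
      define gg where "gg = (\<Sum>m\<le>K. \<Sum>n\<le>K. G m n)"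
      have fsG: "\<And>m n. finite (supp (G m n))"
      proof -
        fix m n
        show "finite (supp (G m n))"
        proof (rule supp_bound)
          show "vars (G m n)" using G by blast
          fix al be assume nz: "G m n al be \<noteq> 0"
          have "hom (int m + 1) (int n + 1) (G m n)" using G by blast
          then have "int (deg al) = int m + 1 \<and> int (deg be) = int n + 1" using nz by (auto simp: hom_def)
          then show "deg al \<le> Suc (max m n) \<and> deg be \<le> Suc (max m n)" by auto
        qed
      qed
      have "Ss gg = f"
        unfolding gg_def using G by (simp add: fd[symmetric])
      moreover have "finite (supp gg)" unfolding gg_def
        by (intro fin_supp_sum fsG)
      moreover have "vars gg" unfolding gg_def using G by (intro vars_sum) auto
      moreover have "Bx gg = 0" unfolding gg_def using G by simp
      moreover have "Tt gg = 0" unfolding gg_def using G by simp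
      ultimately show "f \<in> Ss ` {p. finite (supp p) \<and> vars p \<and> Bx p = 0 \<and> Tt p = 0}" by blast
    qed
  qed
qed


end
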